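(* Let $k\ge1$ and $s$ be integers with $0\le s\le 2k-1$, and let $\chi=1$ if $s$ is odd and $\chi=0$ if $s$ is even. Then $$\det\Big(C_{2j}^{(2k-1)}(2i+\chi\to s)\Big)_{0\le i,j\le k-1}=\begin{cases}0,&\text{if }\gcd(s+1,2k+1)\ne1,\\ (-1)^{\sum_{i=1}^k\lfloor\frac{i(s+1)}{2k+1}\rfloor},&\text{if }\gcd(s+1,2k+1)=1.\end{cases}$$
   Context: $C_N^{(K)}(r\to s)$ is the number of lattice paths with steps $(1,1),(1,-1)$ from $(0,r)$ to $(N,s)$ never going below the $x$-axis nor above the line $y=K$. *)

theory Defs
  imports "Jordan_Normal_Form.Determinant"
begin

text \<open>A lattice path with N steps is a list of N steps, True = (1,1), False = (1,-1).
  Height after a prefix of the steps, starting at height r.\<close>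

definition path_height :: "int \<Rightarrow> bool list \<Rightarrow> int" where
  "path_height r ss = r + (\<Sum>b\<leftarrow>ss. if b then 1 else -1)"

definition strip_paths :: "nat \<Rightarrow> nat \<Rightarrow> int \<Rightarrow> int \<Rightarrow> bool list set" where
  "strip_paths K N r s = {ss. length ss = N \<and> path_height r ss = s \<and>
      (\<forall>m\<le>N. 0 \<le> path_height r (take m ss) \<and> path_height r (take m ss) \<le> int K)}"

definition C :: "nat \<Rightarrow> nat \<Rightarrow> int \<Rightarrow> int \<Rightarrow> nat" where
  "C K N r s = card (strip_paths K N r s)"

end

theory Submission
  imports Defs "HOL-Number_Theory.Cong"
begin


lemma ph_Cons: "path_height r (b # ss) = path_height (r + (if b then 1 else -1)) ss"
  unfolding path_height_def by simp

lemma ph_Nil[simp]: "path_height r [] = r"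
  unfolding path_height_def by simp

lemma finite_strip: "finite (strip_paths K N r s)"
proof -
  have "strip_paths K N r s \<subseteq> {xs. set xs \<subseteq> (UNIV::bool set) \<and> length xs = N}"
    unfolding strip_paths_def by auto
  moreover have "finite {xs. set xs \<subseteq> (UNIV::bool set) \<and> length xs = N}"
    by (rule finite_lists_length_eq) simp
  ultimately show ?thesis by (rule finite_subset)
qed

lemma strip_out: assumes "r < 0 \<or> r > int K" shows "strip_paths K N r s = {}"
proof -
  { fix ss assume "ss \<in> strip_paths K N r s"
    hence "0 \<le> path_height r (take 0 ss) \<and> path_height r (take 0 ss) \<le> int K"
      unfolding strip_paths_def by blast
    with assms have False by simp }
  thus ?thesis by blast
qed

lemma C_out: "r < 0 \<or> r > int K \<Longrightarrow> C K N r s = 0"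
  unfolding C_def using strip_out by simp

lemma C_zero: "C K 0 r s = (if r = s \<and> 0 \<le> r \<and> r \<le> int K then 1 else 0)"
proof -
  have "strip_paths K 0 r s = (if r = s \<and> 0 \<le> r \<and> r \<le> int K then {[]} else {})"
    unfolding strip_paths_def by auto
  thus ?thesis unfolding C_def by simp
qed

lemma strip_Suc: assumes "0 \<le> r" "r \<le> int K"
  shows "strip_paths K (Suc N) r s = Cons True ` strip_paths K N (r+1) s \<union> Cons False ` strip_paths K N (r-1) s"
proof (intro equalityI subsetI)
  fix ss assume A: "ss \<in> strip_paths K (Suc N) r s"
  then obtain b ss' where ss: "ss = b # ss'" unfolding strip_paths_def by (cases ss) auto
  let ?r = "r + (if b then 1 else -1)"
  have "ss' \<in> strip_paths K N ?r s"
    unfolding strip_paths_def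
  proof (intro CollectI conjI allI impI)
    show "length ss' = N" using A ss unfolding strip_paths_def by auto
    show "path_height ?r ss' = s" using A ss unfolding strip_paths_def by (auto simp: ph_Cons)
    fix m assume "m \<le> N"
    hence "Suc m \<le> Suc N" by simp
    with A have "0 \<le> path_height r (take (Suc m) ss) \<and> path_height r (take (Suc m) ss) \<le> int K"
      unfolding strip_paths_def by blast
    thus "0 \<le> path_height ?r (take m ss')" "path_height ?r (take m ss') \<le> int K"
      using ss by (auto simp: ph_Cons)
  qed
  thus "ss \<in> Cons True ` strip_paths K N (r+1) s \<union> Cons False ` strip_paths K N (r-1) s"
    using ss by (cases b) auto
next
  fix ss assume "ss \<in> Cons True ` strip_paths K N (r+1) s \<union> Cons False ` strip_paths K N (r-1) s"
  then obtain b ss' where ss: "ss = b # ss'" and B: "ss' \<in> strip_paths K N (r + (if b then 1 else -1)) s"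
  proof (elim UnE imageE)
    fix x assume "x \<in> strip_paths K N (r + 1) s" "ss = True # x"
    thus thesis using that[of True x] by simp
  next
    fix x assume "x \<in> strip_paths K N (r - 1) s" "ss = False # x"
    thus thesis using that[of False x] by simp
  qed
  show "ss \<in> strip_paths K (Suc N) r s"
    unfolding strip_paths_def
  proof (intro CollectI conjI allI impI)
    show "length ss = Suc N" using B ss unfolding strip_paths_def by auto
    show "path_height r ss = s" using B ss unfolding strip_paths_def by (auto simp: ph_Cons)
    fix m assume m: "m \<le> Suc N"
    have "0 \<le> path_height r (take m ss) \<and> path_height r (take m ss) \<le> int K"
    proof (cases m)
      case 0 thus ?thesis using assms by simp
    next
      case (Suc m')
      with m B have "0 \<le> path_height (r + (if b then 1 else -1)) (take m' ss') \<and> path_height (r + (if b then 1 else -1)) (take m' ss') \<le> int K"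
        unfolding strip_paths_def by auto
      thus ?thesis using Suc ss by (simp add: ph_Cons)
    qed
    thus "0 \<le> path_height r (take m ss)" "path_height r (take m ss) \<le> int K" by auto
  qed
qed

lemma C_Suc: assumes "0 \<le> r" "r \<le> int K"
  shows "C K (Suc N) r s = C K N (r+1) s + C K N (r-1) s"
  unfolding C_def strip_Suc[OF assms]
  by (subst card_Un_disjoint) (auto simp: finite_strip card_image)

definition eps :: "int \<Rightarrow> int \<Rightarrow> int \<Rightarrow> int" where
  "eps P m p = (if p mod P = m mod P then 1 else 0) - (if p mod P = (-m) mod P then 1 else 0)"

fun Wf :: "int \<Rightarrow> int \<Rightarrow> nat \<Rightarrow> int \<Rightarrow> int" where
  "Wf P m 0 p = eps P m p"
| "Wf P m (Suc j) p = Wf P m j (p+1) + Wf P m j (p-1)"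

lemma neg_mod_iff: "((-p) mod (P::int) = x mod P) = (p mod P = (-x) mod P)"
proof -
  have "((-p) mod P = x mod P) = (P dvd (-p - x))" by (simp add: mod_eq_dvd_iff)
  also have "\<dots> = (P dvd (p - (-x)))" by (metis dvd_minus_iff minus_diff_eq diff_minus_eq_add add.commute minus_add_distrib)
  also have "\<dots> = (p mod P = (-x) mod P)" by (simp add: mod_eq_dvd_iff)
  finally show ?thesis .
qed

lemma eps_neg: "eps P m (-p) = - eps P m p"
  unfolding eps_def using neg_mod_iff[of p P m] neg_mod_iff[of p P "-m"] by auto

lemma Wf_neg: "Wf P m j (-p) = - Wf P m j p"
proof (induction j arbitrary: p)
  case 0 thus ?case by (simp add: eps_neg)
next
  case (Suc j)
  have "Wf P m (Suc j) (-p) = Wf P m j (-(p - 1)) + Wf P m j (-(p+1))" by simp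
  also have "\<dots> = - Wf P m (Suc j) p" using Suc[of "p-1"] Suc[of "p+1"] by simp
  finally show ?case .
qed

lemma Wf_per: "Wf P m j (p + P) = Wf P m j p"
proof (induction j arbitrary: p)
  case 0 thus ?case by (simp add: eps_def)
next
  case (Suc j)
  have "Wf P m (Suc j) (p + P) = Wf P m j ((p+1) + P) + Wf P m j ((p-1) + P)" by (simp add: algebra_simps)
  thus ?case using Suc by simp
qed

lemma Wf_zero: "Wf P m j 0 = 0"
  using Wf_neg[of P m j 0] by simp

lemma Wf_half: assumes "P = 2 * q" shows "Wf P m j q = 0"
proof -
  have "Wf P m j q = Wf P m j (-q + P)" using assms by simp
  also have "\<dots> = Wf P m j (-q)" by (rule Wf_per)
  also have "\<dots> = - Wf P m j q" by (rule Wf_neg)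
  finally show ?thesis by simp
qed

lemma C_W: fixes K N and r s :: int assumes "0 \<le> s" "s \<le> int K"
  shows "-1 \<le> r \<Longrightarrow> r \<le> int K + 1 \<Longrightarrow> int (C K N r s) = Wf (2*(int K+2)) (s+1) N (r+1)"
proof (induction N arbitrary: r)
  case 0
  let ?P = "2*(int K+2)"
  have a: "((r+1) mod ?P = (s+1) mod ?P) = (r = s)"
  proof -
    have "(r+1) mod ?P = r+1" using 0 by (intro mod_pos_pos_trivial) auto
    moreover have "(s+1) mod ?P = s+1" using assms by (intro mod_pos_pos_trivial) auto
    ultimately show ?thesis by simp
  qed
  have b: "(r+1) mod ?P \<noteq> (-(s+1)) mod ?P"
  proof
    assume "(r+1) mod ?P = (-(s+1)) mod ?P"
    hence "?P dvd (r+1) - (-(s+1))" by (simp add: mod_eq_dvd_iff)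
    then obtain t where t: "r + s + 2 = ?P * t" by (auto simp: dvd_def algebra_simps)
    have e: "?P * t = r + s + 2" using t by simp
    have "0 < ?P * t" "?P * t < ?P * 1" unfolding e using 0 assms by auto
    hence "0 < t" "?P * t < ?P * 1" by (auto simp: zero_less_mult_iff)
    hence "0 < t" "t < 1" using mult_less_cancel_left_pos[of ?P t 1] by auto
    thus False by simp
  qed
  show ?case using a b 0 assms by (simp add: C_zero eps_def)
next
  case (Suc N)
  show ?case
  proof (cases "r = -1 \<or> r = int K + 1")
    case True
    hence "C K (Suc N) r s = 0" by (intro C_out) auto
    moreover have "Wf (2*(int K+2)) (s+1) (Suc N) (r+1) = 0"
    proof (cases "r = -1")
      case True thus ?thesis using Wf_zero[of "2*(int K+2)" "s+1" "Suc N"] by simp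
    next
      case False hence "r + 1 = int K + 2" using \<open>r = -1 \<or> r = int K + 1\<close> by simp
      thus ?thesis using Wf_half[of "2*(int K+2)" "int K+2" "s+1" "Suc N"] by simp
    qed
    ultimately show ?thesis by simp
  next
    case False
    hence r: "0 \<le> r" "r \<le> int K" using Suc.prems by auto
    have "int (C K (Suc N) r s) = int (C K N (r+1) s) + int (C K N (r-1) s)" using C_Suc[OF r] by simp
    also have "\<dots> = Wf (2*(int K+2)) (s+1) N (r+1+1) + Wf (2*(int K+2)) (s+1) N (r-1+1)"
      using Suc.IH r by simp
    finally show ?thesis by simp
  qed
qed


definition Ecol :: "int \<Rightarrow> int \<Rightarrow> nat \<Rightarrow> int \<Rightarrow> int" where
  "Ecol P m u p = (if u = 0 then eps P m p else eps P m (p + 2 * int u) + eps P m (p - 2 * int u))"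

fun Uc :: "nat \<Rightarrow> nat \<Rightarrow> int" where
  "Uc 0 u = (if u = 0 then 1 else 0)"
| "Uc (Suc j) u = 2 * Uc j u + (if u = 0 then 2 * Uc j 1 else Uc j (u-1) + Uc j (u+1))"

lemma Uc_zero: "j < u \<Longrightarrow> Uc j u = 0"
  by (induction j arbitrary: u) auto

lemma Uc_diag: "Uc j j = 1"
  by (induction j) (auto simp: Uc_zero)

lemma Wf_two: "Wf P m (Suc (Suc J)) p = Wf P m J (p+2) + 2 * Wf P m J p + Wf P m J (p - 2)"
proof -
  have e: "p + 1 + 1 = p + 2" "p - 1 - 1 = p - 2" "p+1-1 = p" "p-1+1=p" by simp_all
  show ?thesis by (simp only: Wf.simps e)
qed

lemma AE: "Ecol P m u (p+2) + Ecol P m u (p-2) =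
   Ecol P m (Suc u) p + (if u = 0 then 0 else Ecol P m (u-1) p) + (if u = 1 then Ecol P m 0 p else 0)"
proof -
  consider "u = 0" | "u = 1" | "u \<ge> 2" by linarith
  thus ?thesis
  proof cases
    case 1 thus ?thesis by (simp add: Ecol_def algebra_simps)
  next
    case 2 thus ?thesis by (simp add: Ecol_def algebra_simps)
  next
    case 3
    hence "int (u - 1) = int u - 1" by simp
    thus ?thesis using 3 by (simp add: Ecol_def algebra_simps)
  qed
qed

lemma shift_up: assumes "f L = 0" shows "(\<Sum>u<Suc L. f u * (E (Suc u)::int)) = (\<Sum>u<Suc L. (if u = 0 then 0 else f (u - 1)) * E u)"
proof -
  have "(\<Sum>u<Suc L. (if u = 0 then 0 else f (u - 1)) * E u) = (\<Sum>u<L. f u * E (Suc u))"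
    by (subst sum.lessThan_Suc_shift) simp
  moreover have "(\<Sum>u<Suc L. f u * (E (Suc u)::int)) = (\<Sum>u<L. f u * E (Suc u))" using assms by simp
  ultimately show ?thesis by simp
qed

lemma shift_down: assumes "f (Suc L) = 0" shows "(\<Sum>u<Suc L. (if u = 0 then 0 else f u * (E (u - 1)::int))) = (\<Sum>u<Suc L. f (Suc u) * E u)"
proof -
  have "(\<Sum>u<Suc L. (if u = 0 then 0 else f u * (E (u - 1)::int))) = (\<Sum>u<L. f (Suc u) * E u)"
    by (subst sum.lessThan_Suc_shift) simp
  moreover have "(\<Sum>u<Suc L. f (Suc u) * E u) = (\<Sum>u<L. f (Suc u) * E u)" using assms by simp
  ultimately show ?thesis by simp
qed

lemma W_U: "j < L \<Longrightarrow> Wf P m (2*j) p = (\<Sum>u<L. Uc j u * Ecol P m u p)"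
proof (induction j arbitrary: L p)
  case 0
  have "(\<Sum>u<L. Uc 0 u * Ecol P m u p) = (\<Sum>u\<in>{0}. Uc 0 u * Ecol P m u p)"
    using 0 by (intro sum.mono_neutral_right) auto
  thus ?case by (simp add: Ecol_def)
next
  case (Suc j)
  obtain L' where L: "L = Suc L'" using Suc.prems by (cases L) auto
  have jL: "j < L'" "Uc j L' = 0" "Uc j (Suc L') = 0" using Suc.prems L by (auto simp: Uc_zero)
  have "Wf P m (2 * Suc j) p = Wf P m (2*j) (p+2) + 2 * Wf P m (2*j) p + Wf P m (2*j) (p-2)"
    using Wf_two[of P m "2*j" p] by (simp add: numeral_2_eq_2)
  also have "\<dots> = (\<Sum>u<L. Uc j u * (Ecol P m u (p+2) + Ecol P m u (p-2)) + 2 * (Uc j u * Ecol P m u p))"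
    using Suc.IH[of L] Suc.prems by (simp add: sum.distrib sum_distrib_left algebra_simps)
  also have "\<dots> = (\<Sum>u<L. Uc j u * Ecol P m (Suc u) p)
      + (\<Sum>u<L. (if u = 0 then 0 else Uc j u * Ecol P m (u-1) p))
      + (\<Sum>u<L. (if u = 1 then Uc j u * Ecol P m 0 p else 0))
      + (\<Sum>u<L. 2 * (Uc j u * Ecol P m u p))"
  proof -
    have "\<And>u. Uc j u * (Ecol P m u (p+2) + Ecol P m u (p-2)) + 2 * (Uc j u * Ecol P m u p) =
      Uc j u * Ecol P m (Suc u) p + (if u = 0 then 0 else Uc j u * Ecol P m (u-1) p)
      + (if u = 1 then Uc j u * Ecol P m 0 p else 0) + 2 * (Uc j u * Ecol P m u p)"
      by (simp only: AE) (simp add: algebra_simps)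
    thus ?thesis by (simp only: sum.distrib)
  qed
  also have "(\<Sum>u<L. Uc j u * Ecol P m (Suc u) p) = (\<Sum>u<L. (if u = 0 then 0 else Uc j (u - 1)) * Ecol P m u p)"
    unfolding L by (rule shift_up) (rule jL)
  also have "(\<Sum>u<L. (if u = 0 then 0 else Uc j u * Ecol P m (u-1) p)) = (\<Sum>u<L. Uc j (Suc u) * Ecol P m u p)"
    unfolding L by (rule shift_down) (rule jL)
  also have "(\<Sum>u<L. (if u = 1 then Uc j u * Ecol P m 0 p else 0)) = (\<Sum>u<L. (if u = 0 then Uc j 1 else 0) * Ecol P m u p)"
  proof -
    have "(\<Sum>u<L. (if u = 1 then Uc j u * Ecol P m 0 p else 0)) = Uc j 1 * Ecol P m 0 p"
      using Suc.prems by (simp add: sum.delta)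
    moreover have "(\<Sum>u<L. (if u = 0 then Uc j 1 else 0) * Ecol P m u p) = (\<Sum>u<L. (if u = 0 then Uc j 1 * Ecol P m 0 p else 0))"
      by (intro sum.cong) auto
    moreover have "\<dots> = Uc j 1 * Ecol P m 0 p"
      using Suc.prems by (simp add: sum.delta)
    ultimately show ?thesis by simp
  qed
  also have "(\<Sum>u<L. (if u = 0 then 0 else Uc j (u - 1)) * Ecol P m u p) + (\<Sum>u<L. Uc j (Suc u) * Ecol P m u p) +
      (\<Sum>u<L. (if u = 0 then Uc j 1 else 0) * Ecol P m u p) + (\<Sum>u<L. 2 * (Uc j u * Ecol P m u p))
      = (\<Sum>u<L. Uc (Suc j) u * Ecol P m u p)"
    by (simp add: sum.distrib[symmetric] algebra_simps) (intro sum.cong refl, auto simp: algebra_simps)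
  finally show ?case .
qed


definition ind :: "bool \<Rightarrow> int" where "ind b = (if b then 1 else 0)"

locale L = fixes k :: nat assumes k1: "1 \<le> k"
begin

abbreviation n :: int where "n \<equiv> 2 * int k + 1"

definition cls :: "int \<Rightarrow> nat" where
  "cls x = (if x mod n \<le> int k then nat (x mod n) else nat (n - x mod n))"
definition sg :: "int \<Rightarrow> int" where
  "sg x = (if x mod n = 0 then 0 else if x mod n \<le> int k then 1 else -1)"

lemma n_pos: "n > 0" by simp

lemma cls_le: "cls x \<le> k"
proof -
  have "0 \<le> x mod n" "x mod n < n" by (rule pos_mod_sign[OF n_pos], rule pos_mod_bound[OF n_pos])
  thus ?thesis unfolding cls_def by auto
qed

lemma cls_cong: "[x = y] (mod n) \<Longrightarrow> cls x = cls y \<and> sg x = sg y"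
  unfolding cong_def cls_def sg_def by simp

lemma neg_mod_n: "(-x) mod n = (if x mod n = 0 then 0 else n - x mod n)"
  using zmod_zminus1_eq_if[of x n] by (auto simp: mod_eq_0_iff_dvd)

lemma cls_neg: "cls (-x) = cls x" and sg_neg: "sg (-x) = - sg x"
proof -
  have r: "0 \<le> x mod n" "x mod n < n" by (rule pos_mod_sign[OF n_pos], rule pos_mod_bound[OF n_pos])
  show "cls (-x) = cls x" unfolding cls_def neg_mod_n using r by auto
  show "sg (-x) = - sg x" unfolding sg_def neg_mod_n using r by auto
qed

lemma cls_rep: "[x = sg x * int (cls x)] (mod n)"
proof -
  have r: "0 \<le> x mod n" "x mod n < n" by (rule pos_mod_sign[OF n_pos], rule pos_mod_bound[OF n_pos])
  consider "x mod n = 0" | "x mod n \<noteq> 0" "x mod n \<le> int k" | "x mod n > int k" by linarith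
  thus ?thesis
  proof cases
    case 1 thus ?thesis unfolding sg_def cls_def cong_def by simp
  next
    case 2 thus ?thesis unfolding sg_def cls_def cong_def using r by simp
  next
    case 3
    hence "sg x * int (cls x) = x mod n - n" unfolding sg_def cls_def using r by simp
    thus ?thesis unfolding cong_def by simp
  qed
qed

lemma sg_cases: "sg x = 0 \<or> sg x = 1 \<or> sg x = -1"
  unfolding sg_def by auto

lemma sg_zero_iff: "sg x = 0 \<longleftrightarrow> n dvd x"
  unfolding sg_def by (auto simp: mod_eq_0_iff_dvd)

lemma cls_zero_iff: "cls x = 0 \<longleftrightarrow> n dvd x"
proof -
  have r: "0 \<le> x mod n" "x mod n < n" by (rule pos_mod_sign[OF n_pos], rule pos_mod_bound[OF n_pos])
  have "cls x = 0 \<longleftrightarrow> x mod n = 0"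
  proof (cases "x mod n \<le> int k")
    case True
    hence "cls x = nat (x mod n)" by (simp add: cls_def)
    thus ?thesis using r(1) by linarith
  next
    case False
    hence "cls x = nat (n - x mod n)" by (simp add: cls_def)
    thus ?thesis using r False by linarith
  qed
  thus ?thesis by (simp add: mod_eq_0_iff_dvd)
qed

lemma sg_sq: "\<not> n dvd x \<Longrightarrow> sg x * sg x = 1"
  using sg_cases[of x] sg_zero_iff[of x] by auto

lemma cls_small: "a \<le> k \<Longrightarrow> cls (int a) = a"
proof -
  assume a: "a \<le> k"
  hence "int a mod n = int a" by (intro mod_pos_pos_trivial) auto
  thus ?thesis unfolding cls_def using a by simp
qed

lemma sg_small: "1 \<le> a \<Longrightarrow> a \<le> k \<Longrightarrow> sg (int a) = 1"
proof -
  assume a: "1 \<le> a" "a \<le> k"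
  hence "int a mod n = int a" by (intro mod_pos_pos_trivial) auto
  thus ?thesis unfolding sg_def using a by simp
qed

lemma cong_n_iff: "[x = y] (mod n) \<longleftrightarrow> n dvd x - y"
  by (simp add: cong_iff_dvd_diff)

lemma dvd_two: "n dvd 2 * b \<Longrightarrow> n dvd b"
proof -
  assume "n dvd 2 * b"
  hence "n dvd 2 * b * (int k + 1)" by simp
  moreover have "2 * b * (int k + 1) = b * n + b" by (simp add: algebra_simps)
  ultimately have "n dvd b * n + b" by simp
  thus ?thesis by (simp add: dvd_add_right_iff)
qed

lemma cls_eq_iff: "cls x = cls y \<longleftrightarrow> [x = y] (mod n) \<or> [x = -y] (mod n)"
proof
  assume "[x = y] (mod n) \<or> [x = -y] (mod n)"
  thus "cls x = cls y" using cls_cong[of x y] cls_cong[of x "-y"] cls_neg[of y] by auto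
next
  assume e: "cls x = cls y"
  have rx: "n dvd x - sg x * int (cls x)" and ry: "n dvd y - sg y * int (cls y)"
    using cls_rep[of x] cls_rep[of y] by (simp_all add: cong_n_iff)
  show "[x = y] (mod n) \<or> [x = -y] (mod n)"
  proof (cases "cls x = 0")
    case True
    hence "n dvd x" "n dvd y" using e cls_zero_iff[of x] cls_zero_iff[of y] by auto
    thus ?thesis by (simp add: cong_n_iff)
  next
    case False
    hence "\<not> n dvd y" using e cls_zero_iff[of y] by auto
    hence sy: "sg y * sg y = 1" by (rule sg_sq)
    have "n dvd (x - sg x * int (cls x)) - (sg x * sg y) * (y - sg y * int (cls y))"
      by (rule dvd_diff[OF rx dvd_mult[OF ry]])
    also have "(x - sg x * int (cls x)) - (sg x * sg y) * (y - sg y * int (cls y)) = x - (sg x * sg y) * y"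
      using e sy by (simp add: algebra_simps)
    finally have d: "n dvd x - (sg x * sg y) * y" .
    have "sg x * sg y = 1 \<or> sg x * sg y = -1" using sg_cases[of x] sg_cases[of y] sg_zero_iff[of x] sg_zero_iff[of y] False e cls_zero_iff[of x] cls_zero_iff[of y] by auto
    thus ?thesis using d by (auto simp: cong_n_iff)
  qed
qed

lemma ind_pair: assumes w: "\<not> n dvd w"
  shows "ind ([w = b] (mod n)) + ind ([w = -b] (mod n)) = ind (cls w = cls b)"
proof (cases "n dvd b")
  case True
  have "\<not> [w = b] (mod n)"
  proof
    assume "[w = b] (mod n)" hence "n dvd w - b" by (simp add: cong_n_iff)
    hence "n dvd (w - b) + b" using True by (rule dvd_add)
    thus False using w by simp
  qed
  moreover have "\<not> [w = -b] (mod n)"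
  proof
    assume "[w = -b] (mod n)" hence "n dvd w + b" by (simp add: cong_n_iff)
    hence "n dvd (w + b) - b" using True by (rule dvd_diff)
    thus False using w by simp
  qed
  moreover have "cls w \<noteq> cls b" using True w cls_zero_iff[of w] cls_zero_iff[of b] by auto
  ultimately show ?thesis by (simp add: ind_def)
next
  case False
  have "\<not> ([w = b] (mod n) \<and> [w = -b] (mod n))"
  proof
    assume "[w = b] (mod n) \<and> [w = -b] (mod n)"
    hence "n dvd w - b" "n dvd w + b" by (auto simp: cong_n_iff)
    hence "n dvd (w + b) - (w - b)" by (rule dvd_diff[rotated])
    hence "n dvd 2 * b" by simp
    thus False using False dvd_two by blast
  qed
  moreover have "cls w = cls b \<longleftrightarrow> [w = b] (mod n) \<or> [w = -b] (mod n)" by (rule cls_eq_iff)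
  ultimately show ?thesis by (auto simp: ind_def)
qed

lemma cls_dvdI: "n dvd x - y \<Longrightarrow> cls x = cls y"
  using cls_cong[of x y] by (simp add: cong_n_iff)

lemma sg_dvdI: "n dvd x - y \<Longrightarrow> sg x = sg y"
  using cls_cong[of x y] by (simp add: cong_n_iff)

definition D0 :: "nat \<Rightarrow> nat \<Rightarrow> int" where
  "D0 a v = ind (a - 1 = v) - ind (cls (int a + 1) = v)"

lemma dvd_neg_eq: "b = a \<or> b = -a \<Longrightarrow> (n dvd a) = (n dvd b)"
  by auto

lemma dvd_shift: "n dvd x - y \<Longrightarrow> (n dvd x - c) = (n dvd y - c)"
proof -
  assume "n dvd x - y"
  moreover have "x - c = (x - y) + (y - c)" by simp
  ultimately show ?thesis by (metis dvd_add_right_iff)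
qed

lemma rep_dvd: "n dvd z - sg z * int (cls z)"
  using cls_rep[of z] by (simp add: cong_n_iff)

lemma sg_pm: "\<not> n dvd z \<Longrightarrow> sg z = 1 \<or> sg z = -1"
  using sg_cases[of z] sg_zero_iff[of z] by auto

lemma cls_pos: "\<not> n dvd z \<Longrightarrow> 1 \<le> cls z"
  using cls_zero_iff[of z] by auto

lemma EI: assumes z: "\<not> n dvd z" and w: "\<not> n dvd w"
  shows "ind ([z + w = 1] (mod n)) + ind ([z - w = 1] (mod n)) - ind ([z + w = -1] (mod n)) - ind ([z - w = -1] (mod n))
     = sg z * D0 (cls z) (cls w)"
proof -
  have e1: "[z + w = 1] (mod n) \<longleftrightarrow> [w = 1 - z] (mod n)" "[z - w = 1] (mod n) \<longleftrightarrow> [w = -(1 - z)] (mod n)"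
    "[z + w = -1] (mod n) \<longleftrightarrow> [w = -1 - z] (mod n)" "[z - w = -1] (mod n) \<longleftrightarrow> [w = -(-1 - z)] (mod n)"
    unfolding cong_n_iff
    by (rule dvd_neg_eq, simp)+
  have s1: "ind ([z + w = 1] (mod n)) + ind ([z - w = 1] (mod n)) = ind (cls w = cls (1 - z))"
    unfolding e1 by (rule ind_pair[OF w])
  have s2: "ind ([z + w = -1] (mod n)) + ind ([z - w = -1] (mod n)) = ind (cls w = cls (-1 - z))"
    unfolding e1 by (rule ind_pair[OF w])
  define a where "a = cls z"
  have a: "1 \<le> a" "a \<le> k" using cls_pos[OF z] cls_le[of z] by (auto simp: a_def)
  have r: "n dvd z - sg z * int a" using rep_dvd[of z] by (simp add: a_def)
  have am1: "cls (int a - 1) = a - 1" using cls_small[of "a - 1"] a by (simp add: of_nat_diff)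
  from sg_pm[OF z] show ?thesis
  proof
    assume sz: "sg z = 1"
    have "cls (1 - z) = cls (-(int a - 1))" using r sz by (intro cls_dvdI) (simp add: dvd_diff_commute algebra_simps)
    moreover have "cls (-(int a - 1)) = cls (int a - 1)" by (rule cls_neg)
    ultimately have c1: "cls (1 - z) = a - 1" using am1 by simp
    have "cls (-1 - z) = cls (-(int a + 1))" using r sz by (intro cls_dvdI) (simp add: dvd_diff_commute algebra_simps)
    moreover have "cls (-(int a + 1)) = cls (int a + 1)" by (rule cls_neg)
    ultimately have c2: "cls (-1 - z) = cls (int a + 1)" by simp
    show ?thesis using s1 s2 c1 c2 sz unfolding D0_def a_def[symmetric]
      by (simp add: algebra_simps eq_commute[of "cls w"] eq_commute[of "a - 1"])
  next
    assume sz: "sg z = -1"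
    have r'': "n dvd z + int a" using r sz by simp
    have "(1 - z) - (int a + 1) = -(z + int a)" by simp
    hence "n dvd (1 - z) - (int a + 1)" using r'' by (simp only: dvd_minus_iff)
    hence c1: "cls (1 - z) = cls (int a + 1)" by (rule cls_dvdI)
    have "(-1 - z) - (int a - 1) = -(z + int a)" by simp
    hence "n dvd (-1 - z) - (int a - 1)" using r'' by (simp only: dvd_minus_iff)
    hence "cls (-1 - z) = cls (int a - 1)" by (rule cls_dvdI)
    hence c2: "cls (-1 - z) = a - 1" using am1 by simp
    show ?thesis using s1 s2 c1 c2 sz unfolding D0_def a_def[symmetric]
      by (simp add: algebra_simps eq_commute[of "cls w"] eq_commute[of "a - 1"])
  qed
qed

lemma not_dvd_small: "1 \<le> x \<Longrightarrow> x < n \<Longrightarrow> \<not> n dvd x"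
  using zdvd_imp_le by fastforce

lemma E0: assumes z: "\<not> n dvd z"
  shows "ind ([z = 1] (mod n)) - ind ([z = -1] (mod n)) = sg z * D0 (cls z) 0"
proof -
  define a where "a = cls z"
  have a: "1 \<le> a" "a \<le> k" using cls_pos[OF z] cls_le[of z] by (auto simp: a_def)
  have r: "n dvd z - sg z * int a" using rep_dvd[of z] by (simp add: a_def)
  have nd: "\<not> n dvd int a + 1" using a by (intro not_dvd_small) auto
  have c0: "cls (int a + 1) \<noteq> 0" using nd cls_zero_iff by simp
  have a1: "n dvd int a - 1 \<longleftrightarrow> a = 1"
  proof
    assume "n dvd int a - 1"
    moreover have "0 \<le> int a - 1" "int a - 1 < n" using a by auto
    ultimately have "int a - 1 = 0" using zdvd_imp_le by (cases "int a - 1 = 0") fastforce+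
    thus "a = 1" by simp
  qed simp
  from sg_pm[OF z] show ?thesis
  proof
    assume sz: "sg z = 1"
    have r': "n dvd z - int a" using r sz by simp
    have "[z = 1] (mod n) \<longleftrightarrow> n dvd int a - 1" unfolding cong_n_iff using dvd_shift[OF r', of 1] by simp
    moreover have "[z = -1] (mod n) \<longleftrightarrow> n dvd int a + 1" unfolding cong_n_iff using dvd_shift[OF r', of "-1"] by simp
    ultimately show ?thesis using a1 nd c0 sz a unfolding D0_def a_def[symmetric] ind_def by auto
  next
    assume sz: "sg z = -1"
    have r': "n dvd z - (- int a)" using r sz by simp
    have "[z = -1] (mod n) \<longleftrightarrow> n dvd -int a + 1" unfolding cong_n_iff using dvd_shift[OF r', of "-1"] by simp
    also have "\<dots> \<longleftrightarrow> n dvd int a - 1" by (rule dvd_neg_eq) simp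
    finally have A: "[z = -1] (mod n) \<longleftrightarrow> n dvd int a - 1" .
    have "[z = 1] (mod n) \<longleftrightarrow> n dvd -int a - 1" unfolding cong_n_iff using dvd_shift[OF r', of "1"] by simp
    also have "\<dots> \<longleftrightarrow> n dvd int a + 1" by (rule dvd_neg_eq) simp
    finally have "[z = 1] (mod n) \<longleftrightarrow> n dvd int a + 1" .
    note B = this
    show ?thesis using A B using a1 nd c0 sz a unfolding D0_def a_def[symmetric] ind_def by auto
  qed
qed

end


lemma det_unique_perm:
  fixes A :: "'a :: idom mat"
  assumes A: "A \<in> carrier_mat n n" and q: "q permutes {0..<n}"
    and uniq: "\<And>p. p permutes {0..<n} \<Longrightarrow> (\<forall>i<n. A $$ (i, p i) \<noteq> 0) \<Longrightarrow> p = q"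
  shows "det A = signof q * (\<Prod>i=0..<n. A $$ (i, q i))"
proof -
  let ?PU = "{p. p permutes {0..<n}}"
  let ?pp = "\<lambda>p. signof p * (\<Prod>i=0..<n. A $$ (i, p i)) :: 'a"
  have fPU: "finite ?PU" by (rule finite_permutations) simp
  have p0: "?pp p = 0" if p: "p \<in> ?PU - {q}" for p
  proof -
    from p have "p permutes {0..<n}" "p \<noteq> q" by auto
    with uniq have "\<not> (\<forall>i<n. A $$ (i, p i) \<noteq> 0)" by blast
    then obtain i where "i < n" "A $$ (i, p i) = 0" by blast
    hence "(\<Prod>i=0..<n. A $$ (i, p i)) = 0" by (intro prod_zero) auto
    thus ?thesis by simp
  qed
  have "det A = (\<Sum>p\<in>?PU. ?pp p)" by (rule det_def'[OF A])
  also have "\<dots> = ?pp q + (\<Sum>p\<in>?PU - {q}. ?pp p)"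
    by (rule sum.remove) (use fPU q in auto)
  also have "(\<Sum>p\<in>?PU - {q}. ?pp p) = 0" by (rule sum.neutral) (use p0 in auto)
  finally show ?thesis by simp
qed

context L
begin

lemma upper_det1:
  assumes "\<And>i j. j < i \<Longrightarrow> i < k \<Longrightarrow> f i j = 0" "\<And>i. i < k \<Longrightarrow> f i i = 1"
  shows "det (mat k k (\<lambda>(i,j). f i j) :: int mat) = 1"
proof -
  have "det (mat k k (\<lambda>(i,j). f i j) :: int mat) = prod_list (diag_mat (mat k k (\<lambda>(i,j). f i j)))"
    by (rule det_upper_triangular[of _ k]) (auto simp: upper_triangular_def assms)
  also have "\<dots> = 1" unfolding prod_list_diag_prod using assms by simp
  finally show ?thesis .
qed

lemma D0_rowsum: assumes "1 \<le> a" "a \<le> k" shows "(\<Sum>v<Suc k. D0 a v) = 0"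
proof -
  have "(\<Sum>v<Suc k. D0 a v) = (\<Sum>v<Suc k. ind (a - 1 = v)) - (\<Sum>v<Suc k. ind (cls (int a + 1) = v))"
    unfolding D0_def by (simp add: sum_subtractf)
  also have "(\<Sum>v<Suc k. ind (a - 1 = v)) = 1" using assms unfolding ind_def by (simp add: sum.delta)
  also have "(\<Sum>v<Suc k. ind (cls (int a + 1) = v)) = 1" using cls_le[of "int a + 1"] unfolding ind_def by (simp add: sum.delta)
  finally show ?thesis by simp
qed

lemma D2_det: "det (mat k k (\<lambda>(a,v). D0 (a+1) v)) = 1"
proof (rule upper_det1)
  fix a v assume "v < a" "a < k"
  have "cls (int (a+1) + 1) \<noteq> v"
  proof (cases "a + 2 \<le> k")
    case True
    hence "cls (int (a+2)) = a + 2" by (intro cls_small)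
    thus ?thesis using \<open>v < a\<close> by (simp add: add.commute)
  next
    case False
    hence "a + 1 = k" using \<open>a < k\<close> by simp
    hence "int (a+1) + 1 - (-(int k)) = n" by simp
    hence "cls (int (a+1) + 1) = cls (-(int k))" by (intro cls_dvdI) simp
    also have "\<dots> = k" using cls_neg cls_small by simp
    finally show ?thesis using \<open>v < a\<close> \<open>a < k\<close> by simp
  qed
  thus "D0 (a+1) v = 0" unfolding D0_def ind_def using \<open>v < a\<close> by auto
next
  fix a assume "a < k"
  have "cls (int (a+1) + 1) \<noteq> a"
  proof (cases "a + 2 \<le> k")
    case True
    hence "cls (int (a+2)) = a + 2" by (intro cls_small)
    thus ?thesis by (simp add: add.commute)
  next
    case False
    hence "a + 1 = k" using \<open>a < k\<close> by simp
    hence "int (a+1) + 1 - (-(int k)) = n" by simp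
    hence "cls (int (a+1) + 1) = cls (-(int k))" by (intro cls_dvdI) simp
    also have "\<dots> = k" using cls_neg cls_small by simp
    finally show ?thesis using \<open>a < k\<close> by simp
  qed
  thus "D0 (a+1) a = 1" unfolding D0_def ind_def by auto
qed

end


lemma small_dvd_zero: fixes t :: int shows "n dvd t \<Longrightarrow> \<bar>t\<bar> < n \<Longrightarrow> t = 0"
  using dvd_imp_le_int[of t n] by fastforce

context L
begin

lemma R_mult: assumes z: "\<And>i. i < k \<Longrightarrow> \<not> n dvd z i"
  shows "mat k k (\<lambda>(i,a). if cls (z i) = a+1 then sg (z i) else 0) * mat k k (\<lambda>(a,v). D0 (a+1) v)
       = mat k k (\<lambda>(i,v). sg (z i) * D0 (cls (z i)) v)"
proof (rule eq_matI)
  fix i v assume iv: "i < dim_row (mat k k (\<lambda>(i,v). sg (z i) * D0 (cls (z i)) v))"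
     "v < dim_col (mat k k (\<lambda>(i,v). sg (z i) * D0 (cls (z i)) v))"
  hence i: "i < k" and v: "v < k" by auto
  have c: "1 \<le> cls (z i)" "cls (z i) \<le> k" using cls_pos[OF z[OF i]] cls_le by auto
  have "(\<Sum>a = 0..<k. (if cls (z i) = a+1 then sg (z i) else 0) * D0 (a+1) v)
      = (\<Sum>a = 0..<k. if a = cls (z i) - 1 then sg (z i) * D0 (cls (z i)) v else 0)"
    by (intro sum.cong refl) (use c in auto)
  also have "\<dots> = sg (z i) * D0 (cls (z i)) v" using c by (simp add: sum.delta)
  finally show "(mat k k (\<lambda>(i,a). if cls (z i) = a+1 then sg (z i) else 0) * mat k k (\<lambda>(a,v). D0 (a+1) v)) $$ (i, v)
      = mat k k (\<lambda>(i,v). sg (z i) * D0 (cls (z i)) v) $$ (i, v)"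
    using i v by (simp add: scalar_prod_def)
qed auto

lemma R_det: assumes z: "\<And>i. i < k \<Longrightarrow> \<not> n dvd z i"
  and sigma: "(\<lambda>i. if i < k then cls (z i) - 1 else i) permutes {0..<k}"
  shows "det (mat k k (\<lambda>(i,a). if cls (z i) = a+1 then sg (z i) else 0))
    = sign (\<lambda>i. if i < k then cls (z i) - 1 else i) * (\<Prod>i=0..<k. sg (z i))"
proof -
  let ?s = "\<lambda>i. if i < k then cls (z i) - 1 else i"
  have c: "1 \<le> cls (z i)" if "i < k" for i using cls_pos[OF z[OF that]] .
  have "det (mat k k (\<lambda>(i,a). if cls (z i) = a+1 then sg (z i) else 0))
    = signof ?s * (\<Prod>i=0..<k. mat k k (\<lambda>(i,a). if cls (z i) = a+1 then sg (z i) else 0) $$ (i, ?s i))"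
  proof (rule det_unique_perm[OF _ sigma])
    fix p assume p: "p permutes {0..<k}" and nz: "\<forall>i<k. mat k k (\<lambda>(i,a). if cls (z i) = a+1 then sg (z i) else 0) $$ (i, p i) \<noteq> 0"
    show "p = ?s"
    proof
      fix i show "p i = ?s i"
      proof (cases "i < k")
        case True
        have "p i < k" using p True permutes_in_image by fastforce
        with nz True have "cls (z i) = p i + 1" by (auto split: if_splits)
        thus ?thesis using True by simp
      next
        case False thus ?thesis using permutes_not_in[OF p] by simp
      qed
    qed
  qed simp
  also have "(\<Prod>i=0..<k. mat k k (\<lambda>(i,a). if cls (z i) = a+1 then sg (z i) else 0) $$ (i, ?s i)) = (\<Prod>i=0..<k. sg (z i))"
  proof (intro prod.cong refl)
    fix i assume "i \<in> {0..<k}"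
    hence i: "i < k" by simp
    have "cls (z i) - 1 < k" using cls_le[of "z i"] c[OF i] by simp
    thus "mat k k (\<lambda>(i,a). if cls (z i) = a+1 then sg (z i) else 0) $$ (i, ?s i) = sg (z i)"
      using i c[OF i] by simp
  qed
  finally show ?thesis by simp
qed

end

locale L2 = L + fixes g h :: int assumes gh: "n dvd g * h - 1"
begin

lemma g_cancel: "n dvd g * x \<Longrightarrow> n dvd x"
proof -
  assume "n dvd g * x"
  hence "n dvd g * x * h - x * (g * h - 1)" using gh by (intro dvd_diff) auto
  also have "g * x * h - x * (g * h - 1) = x" by (simp add: algebra_simps)
  finally show ?thesis .
qed

lemma h_cancel: "n dvd h * x \<Longrightarrow> n dvd x"
proof -
  assume "n dvd h * x"
  hence "n dvd h * x * g - x * (g * h - 1)" using gh by (intro dvd_diff) auto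
  also have "h * x * g - x * (g * h - 1) = x" by (simp add: algebra_simps)
  finally show ?thesis .
qed

definition Phi :: "nat \<Rightarrow> nat" where "Phi x = (if x \<le> k then cls (g * int x) else x)"

lemma Phi_0: "Phi 0 = 0" unfolding Phi_def using cls_small[of 0] by simp

lemma Phi_le: "x \<le> k \<Longrightarrow> Phi x \<le> k" unfolding Phi_def using cls_le by simp

lemma Phi_inj: assumes "x \<le> k" "y \<le> k" "Phi x = Phi y" shows "x = y"
proof -
  have "cls (g * int x) = cls (g * int y)" using assms unfolding Phi_def by simp
  hence "[g * int x = g * int y] (mod n) \<or> [g * int x = - (g * int y)] (mod n)" by (simp add: cls_eq_iff)
  hence "n dvd g * (int x - int y) \<or> n dvd g * (int x + int y)" by (auto simp: cong_n_iff right_diff_distrib distrib_left)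
  hence "n dvd int x - int y \<or> n dvd int x + int y" using g_cancel by blast
  thus ?thesis
  proof
    assume "n dvd int x - int y"
    hence "int x - int y = 0" using assms by (intro small_dvd_zero) auto
    thus ?thesis by simp
  next
    assume "n dvd int x + int y"
    hence "int x + int y = 0" using assms by (intro small_dvd_zero) auto
    thus ?thesis by simp
  qed
qed

lemma Phi_perm: "Phi permutes {0..k}"
  by (rule inj_imp_permutes) (auto simp: inj_on_def Phi_le cls_le intro: Phi_inj simp: Phi_def)

lemma Phi_perm1: "Phi permutes {1..k}"
proof (rule inj_imp_permutes)
  show "inj_on Phi {1..k}" by (auto simp: inj_on_def intro: Phi_inj)
  fix x
  show "x \<in> {1..k} \<Longrightarrow> Phi x \<in> {1..k}"
  proof -
    assume x: "x \<in> {1..k}"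
    have "Phi x \<noteq> 0" using Phi_inj[of x 0] Phi_0 x by auto
    thus ?thesis using Phi_le x by auto
  qed
  show "x \<notin> {1..k} \<Longrightarrow> Phi x = x" using Phi_0 by (cases "x = 0") (auto simp: Phi_def)
qed simp

lemma Phi_permutation: "permutation Phi"
  using Phi_perm by (auto simp: permutation_permutes)

definition Qm :: "int mat" where "Qm = mat k k (\<lambda>(v,u). ind (Phi u = v) - ind (Phi u = k))"

lemma Q_mult: assumes rs: "\<And>i. i < k \<Longrightarrow> (\<Sum>v<Suc k. F i v) = 0"
  shows "mat k k (\<lambda>(i,v). F i v) * Qm = mat k k (\<lambda>(i,u). F i (Phi u))"
proof (rule eq_matI)
  fix i u assume "i < dim_row (mat k k (\<lambda>(i,u). F i (Phi u)))" "u < dim_col (mat k k (\<lambda>(i,u). F i (Phi u)))"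
  hence i: "i < k" and u: "u < k" by auto
  have pu: "Phi u \<le> k" using Phi_le u by simp
  have "(\<Sum>v = 0..<k. F i v * (ind (Phi u = v) - ind (Phi u = k))) = F i (Phi u)"
  proof (cases "Phi u = k")
    case True
    have "(\<Sum>v = 0..<k. F i v * (ind (Phi u = v) - ind (Phi u = k))) = - (\<Sum>v<k. F i v)"
      using True by (simp add: ind_def sum_negf atLeast0LessThan)
    also have "\<dots> = F i k" using rs[OF i] by simp
    finally show ?thesis using True by simp
  next
    case False
    hence "Phi u < k" using pu by simp
    have "(\<Sum>v = 0..<k. F i v * (ind (Phi u = v) - ind (Phi u = k))) = (\<Sum>v = 0..<k. if v = Phi u then F i (Phi u) else 0)"
      using False by (intro sum.cong refl) (auto simp: ind_def)
    thus ?thesis using \<open>Phi u < k\<close> by (simp add: sum.delta)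
  qed
  thus "(mat k k (\<lambda>(i,v). F i v) * Qm) $$ (i, u) = mat k k (\<lambda>(i,u). F i (Phi u)) $$ (i, u)"
    using i u by (simp add: Qm_def scalar_prod_def)
qed (auto simp: Qm_def)


end

context L2 begin
definition qperm where "qperm = inv_into UNIV Phi \<circ> Transposition.transpose (Phi k) k"

lemma qperm_perm: "qperm permutes {0..<k}"
proof -
  have pk: "Phi k \<in> {0..k}" using Phi_le by simp
  have t: "Transposition.transpose (Phi k) k permutes {0..k}" by (rule permutes_swap_id[OF pk]) simp
  have i: "inv_into UNIV Phi permutes {0..k}" by (rule permutes_inv[OF Phi_perm])
  have c: "qperm permutes {0..k}" unfolding qperm_def by (rule permutes_compose[OF t i])
  have qk: "qperm k = k" unfolding qperm_def using permutes_inverses(2)[OF Phi_perm, of k] by simp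
  show ?thesis
  proof (rule permutes_superset[OF c])
    fix x assume "x \<in> {0..k} - {0..<k}"
    hence "x = k" by simp
    thus "qperm x = x" using qk by simp
  qed
qed

lemma Phi_qperm: "v < k \<Longrightarrow> Phi (qperm v) = (if v = Phi k then k else v)"
  unfolding qperm_def using permutes_inverses[OF Phi_perm] by (auto simp: transpose_def)

lemma sign_qperm: "sign qperm = sign Phi * (if Phi k = k then 1 else -1)"
proof -
  have "sign qperm = sign (inv_into UNIV Phi) * sign (Transposition.transpose (Phi k) k)"
    unfolding qperm_def by (rule sign_compose) (auto simp: permutation_inverse Phi_permutation permutation_swap_id)
  thus ?thesis by (simp add: sign_inverse Phi_permutation sign_swap_id)
qed

lemma det_Qm: "det Qm = sign Phi"
proof -
  have "det Qm = signof qperm * (\<Prod>v=0..<k. Qm $$ (v, qperm v))"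
  proof (rule det_unique_perm[OF _ qperm_perm])
    show "Qm \<in> carrier_mat k k" by (simp add: Qm_def)
    fix p assume p: "p permutes {0..<k}" and nz: "\<forall>i<k. Qm $$ (i, p i) \<noteq> 0"
    have pk: "p v < k" if "v < k" for v using p that permutes_in_image by fastforce
    have alt: "Phi (p v) = v \<or> Phi (p v) = k" if "v < k" for v
    proof -
      have "Qm $$ (v, p v) = ind (Phi (p v) = v) - ind (Phi (p v) = k)" using that pk[OF that] by (simp add: Qm_def)
      moreover have "Qm $$ (v, p v) \<noteq> 0" using nz that by blast
      ultimately show ?thesis unfolding ind_def by (cases "Phi (p v) = v"; cases "Phi (p v) = k") auto
    qed
    have pinj: "p v = p w \<Longrightarrow> v = w" for v w using permutes_inj[OF p] by (auto simp: inj_def)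
    have pPhi: "p v \<le> k" if "v < k" for v using pk[OF that] by simp
    show "p = qperm"
    proof
      fix v show "p v = qperm v"
      proof (cases "v < k")
        case False thus ?thesis using permutes_not_in[OF p] permutes_not_in[OF qperm_perm] by simp
      next
        case True
        have qk: "qperm v < k" using qperm_perm True permutes_in_image by fastforce
        show ?thesis
        proof (cases "v = Phi k")
          case True
          have "Phi (p v) \<noteq> v"
          proof
            assume "Phi (p v) = v" hence "Phi (p v) = Phi k" using True by simp
            hence "p v = k" using Phi_inj pPhi \<open>v < k\<close> by blast
            thus False using pk \<open>v < k\<close> by fastforce
          qed
          hence "Phi (p v) = k" using alt \<open>v < k\<close> by blast
          moreover have "Phi (qperm v) = k" using Phi_qperm[OF \<open>v < k\<close>] True by simp
          ultimately show ?thesis using Phi_inj[of "p v" "qperm v"] pPhi[OF \<open>v < k\<close>] qk by simp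
        next
          case False
          have "Phi (p v) \<noteq> k"
          proof
            assume a: "Phi (p v) = k"
            have "Phi k \<noteq> k"
            proof
              assume "Phi k = k"
              hence "Phi (p v) = Phi k" using a by simp
              hence "p v = k" using Phi_inj pPhi \<open>v < k\<close> by blast
              thus False using pk \<open>v < k\<close> by fastforce
            qed
            hence "Phi k < k" using Phi_le[of k] by simp
            have "Phi (p (Phi k)) \<noteq> Phi k"
            proof
              assume "Phi (p (Phi k)) = Phi k"
              hence "p (Phi k) = k" using Phi_inj pPhi \<open>Phi k < k\<close> by blast
              thus False using pk \<open>Phi k < k\<close> by fastforce
            qed
            hence "Phi (p (Phi k)) = k" using alt \<open>Phi k < k\<close> by blast
            hence "p (Phi k) = p v" using a Phi_inj[of "p (Phi k)" "p v"] pPhi[OF \<open>v < k\<close>] pPhi[OF \<open>Phi k < k\<close>] by simp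
            hence "Phi k = v" by (rule pinj)
            thus False using False by simp
          qed
          hence "Phi (p v) = v" using alt \<open>v < k\<close> by blast
          moreover have "Phi (qperm v) = v" using Phi_qperm[OF \<open>v < k\<close>] False by simp
          ultimately show ?thesis using Phi_inj[of "p v" "qperm v"] pPhi[OF \<open>v < k\<close>] qk by simp
        qed
      qed
    qed
  qed
  also have "(\<Prod>v=0..<k. Qm $$ (v, qperm v)) = (\<Prod>v=0..<k. if v = Phi k then -1 else 1)"
  proof (intro prod.cong refl)
    fix v assume "v \<in> {0..<k}" hence v: "v < k" by simp
    have qk: "qperm v < k" using qperm_perm v permutes_in_image by fastforce
    have "Qm $$ (v, qperm v) = ind (Phi (qperm v) = v) - ind (Phi (qperm v) = k)" using v qk by (simp add: Qm_def)
    thus "Qm $$ (v, qperm v) = (if v = Phi k then -1 else 1)"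
      using v Phi_qperm[OF v] by (simp add: ind_def)
  qed
  also have "\<dots> = (if Phi k < k then -1 else 1)" by (simp add: prod.delta)
  also have "(if Phi k < k then -1 else 1) = (if Phi k = k then 1 else -1 :: int)" using Phi_le[of k] by auto
  finally show ?thesis using sign_qperm by (simp add: mult.assoc)
qed

end


locale L3 = L + fixes g m :: int assumes gm: "n dvd g * m - 2"
begin

definition hh :: int where "hh = (int k + 1) * m"
definition cc :: int where "cc = (int k + 1) * g"

lemma gh: "n dvd g * hh - 1"
proof -
  have eq: "g * hh - 1 = (int k + 1) * (g * m - 2) + n" by (simp add: hh_def algebra_simps)
  show ?thesis unfolding eq by (rule dvd_add[OF dvd_mult[OF gm] dvd_refl])
qed

sublocale L2 k g hh by unfold_locales (rule gh)

lemma cm: "n dvd cc * m - 1"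
proof -
  have eq: "cc * m - 1 = (int k + 1) * (g * m - 2) + n" by (simp add: cc_def algebra_simps)
  show ?thesis unfolding eq by (rule dvd_add[OF dvd_mult[OF gm] dvd_refl])
qed

lemma c2: "2 * cc - g = n * g" by (simp add: cc_def algebra_simps)

lemma c_cancel: "n dvd cc * x \<Longrightarrow> n dvd x"
proof -
  assume "n dvd cc * x"
  hence "n dvd cc * x * m - x * (cc * m - 1)" by (rule dvd_diff[OF dvd_mult2 dvd_mult[OF cm]])
  also have "cc * x * m - x * (cc * m - 1) = x" by (simp add: algebra_simps)
  finally show ?thesis .
qed

lemma dvd2n: assumes "2 dvd t" shows "(2 * n dvd t) = (n dvd t)"
proof -
  obtain t' where t: "t = 2 * t'" using assms by blast
  have "(2 * n dvd 2 * t') = (n dvd t')" by (simp only: dvd_mult_cancel_left) simp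
  moreover have "(n dvd t') = (n dvd 2 * t')" using dvd_two[of t'] by auto
  ultimately show ?thesis using t by simp
qed

lemma conv1: assumes "2 dvd X - m" shows "(X mod (2*n) = m mod (2*n)) = (n dvd cc * X - 1)"
proof -
  have "(X mod (2*n) = m mod (2*n)) = (2 * n dvd X - m)" by (simp add: mod_eq_dvd_iff)
  also have "\<dots> = (n dvd X - m)" by (rule dvd2n[OF assms])
  also have "\<dots> = (n dvd cc * X - 1)"
  proof
    assume "n dvd X - m"
    hence "n dvd cc * (X - m) + (cc * m - 1)" by (rule dvd_add[OF dvd_mult cm])
    also have "cc * (X - m) + (cc * m - 1) = cc * X - 1" by (simp add: algebra_simps)
    finally show "n dvd cc * X - 1" .
  next
    assume "n dvd cc * X - 1"
    hence "n dvd m * (cc * X - 1) - X * (cc * m - 1)" by (rule dvd_diff[OF dvd_mult dvd_mult[OF cm]])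
    also have "m * (cc * X - 1) - X * (cc * m - 1) = X - m" by (simp add: algebra_simps)
    finally show "n dvd X - m" .
  qed
  finally show ?thesis .
qed

lemma conv2: assumes "2 dvd X - m" shows "(X mod (2*n) = (-m) mod (2*n)) = (n dvd cc * X + 1)"
proof -
  have e: "2 dvd X + m"
  proof -
    have "X + m = (X - m) + 2 * m" by simp
    moreover have "2 dvd (X - m) + 2 * m" using assms by (rule dvd_add) simp
    ultimately show ?thesis by simp
  qed
  have "(X mod (2*n) = (-m) mod (2*n)) = (2 * n dvd X + m)" by (simp add: mod_eq_dvd_iff)
  also have "\<dots> = (n dvd X + m)" by (rule dvd2n[OF e])
  also have "\<dots> = (n dvd cc * X + 1)"
  proof
    assume "n dvd X + m"
    hence "n dvd cc * (X + m) - (cc * m - 1)" by (rule dvd_diff[OF dvd_mult cm])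
    also have "cc * (X + m) - (cc * m - 1) = cc * X + 1" by (simp add: algebra_simps)
    finally show "n dvd cc * X + 1" .
  next
    assume "n dvd cc * X + 1"
    hence "n dvd m * (cc * X + 1) - X * (cc * m - 1)" by (rule dvd_diff[OF dvd_mult dvd_mult[OF cm]])
    also have "m * (cc * X + 1) - X * (cc * m - 1) = X + m" by (simp add: algebra_simps)
    finally show "n dvd X + m" .
  qed
  finally show ?thesis .
qed

lemma eps_conv: assumes "2 dvd X - m"
  shows "eps (2*n) m X = ind ([cc * X = 1] (mod n)) - ind ([cc * X = -1] (mod n))"
  unfolding eps_def ind_def conv1[OF assms] conv2[OF assms] cong_n_iff by simp

lemma cong_shift: "n dvd Y - Z \<Longrightarrow> [Y = t] (mod n) = [Z = t] (mod n)"
  unfolding cong_n_iff using dvd_shift by blast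

lemma Ecol_formula: assumes p: "2 dvd p - m" "\<not> n dvd p" and u: "u < k"
  shows "Ecol (2*n) m u p = sg (cc * p) * D0 (cls (cc * p)) (Phi u)"
proof -
  have z: "\<not> n dvd cc * p" using p c_cancel by blast
  show ?thesis
  proof (cases "u = 0")
    case True
    thus ?thesis using E0[OF z] eps_conv[OF p(1)] Phi_0 by (simp add: Ecol_def)
  next
    case False
    have w: "\<not> n dvd g * int u"
    proof
      assume "n dvd g * int u"
      hence "n dvd int u" by (rule g_cancel)
      moreover have "1 \<le> int u" "int u < n" using False u by auto
      ultimately show False using not_dvd_small by blast
    qed
    have "(p + 2 * int u) - m = (p - m) + 2 * int u" "(p - 2 * int u) - m = (p - m) - 2 * int u" by simp_all
    hence e1: "2 dvd (p + 2 * int u) - m" "2 dvd (p - 2 * int u) - m" using p(1)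
      by (simp_all only:) (rule dvd_add, simp, simp, rule dvd_diff, simp, simp)
    have s1: "n dvd cc * (p + 2 * int u) - (cc * p + g * int u)"
    proof -
      have "cc * (p + 2 * int u) - (cc * p + g * int u) = int u * (2 * cc - g)" by (simp add: algebra_simps)
      thus ?thesis using c2 by simp
    qed
    have s2: "n dvd cc * (p - 2 * int u) - (cc * p - g * int u)"
    proof -
      have "cc * (p - 2 * int u) - (cc * p - g * int u) = - (int u * (2 * cc - g))" by (simp add: algebra_simps)
      thus ?thesis using c2 by simp
    qed
    have "Ecol (2*n) m u p = eps (2*n) m (p + 2 * int u) + eps (2*n) m (p - 2 * int u)"
      using False by (simp add: Ecol_def)
    also have "\<dots> = ind ([cc * p + g * int u = 1] (mod n)) + ind ([cc * p - g * int u = 1] (mod n))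
        - ind ([cc * p + g * int u = -1] (mod n)) - ind ([cc * p - g * int u = -1] (mod n))"
      unfolding eps_conv[OF e1(1)] eps_conv[OF e1(2)] cong_shift[OF s1] cong_shift[OF s2] by simp
    also have "\<dots> = sg (cc * p) * D0 (cls (cc * p)) (cls (g * int u))" by (rule EI[OF z w])
    also have "cls (g * int u) = Phi u" using u by (simp add: Phi_def)
    finally show ?thesis .
  qed
qed

lemma Emat_det:
  assumes p: "\<And>i. i < k \<Longrightarrow> 2 dvd pp i - m" "\<And>i. i < k \<Longrightarrow> \<not> n dvd pp i"
  and sigma: "(\<lambda>i. if i < k then cls (cc * pp i) - 1 else i) permutes {0..<k}"
  shows "det (mat k k (\<lambda>(i,u). Ecol (2*n) m u (pp i)))
     = sign (\<lambda>i. if i < k then cls (cc * pp i) - 1 else i) * (\<Prod>i=0..<k. sg (cc * pp i)) * sign Phi"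
proof -
  define z where "z i = cc * pp i" for i
  have z: "\<not> n dvd z i" if "i < k" for i using p(2)[OF that] c_cancel unfolding z_def by blast
  have sig': "(\<lambda>i. if i < k then cls (z i) - 1 else i) permutes {0..<k}" unfolding z_def by (rule sigma)
  let ?R = "mat k k (\<lambda>(i,a). if cls (z i) = a+1 then sg (z i) else 0)"
  let ?D = "mat k k (\<lambda>(a,v). D0 (a+1) v)"
  have "mat k k (\<lambda>(i,u). Ecol (2*n) m u (pp i)) = mat k k (\<lambda>(i,u). sg (z i) * D0 (cls (z i)) (Phi u))"
  proof (rule eq_matI)
    fix i u assume "i < dim_row (mat k k (\<lambda>(i,u). sg (z i) * D0 (cls (z i)) (Phi u)))"
      "u < dim_col (mat k k (\<lambda>(i,u). sg (z i) * D0 (cls (z i)) (Phi u)))"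
    hence i: "i < k" and u: "u < k" by auto
    have "Ecol (2*n) m u (pp i) = sg (z i) * D0 (cls (z i)) (Phi u)"
      unfolding z_def by (rule Ecol_formula[OF p(1)[OF i] p(2)[OF i] u])
    thus "mat k k (\<lambda>(i,u). Ecol (2*n) m u (pp i)) $$ (i, u) = mat k k (\<lambda>(i,u). sg (z i) * D0 (cls (z i)) (Phi u)) $$ (i, u)"
      using i u by simp
  qed auto
  also have "\<dots> = mat k k (\<lambda>(i,v). sg (z i) * D0 (cls (z i)) v) * Qm"
  proof (rule Q_mult[symmetric])
    fix i assume i: "i < k"
    have "(\<Sum>v<Suc k. sg (z i) * D0 (cls (z i)) v) = sg (z i) * (\<Sum>v<Suc k. D0 (cls (z i)) v)"
      by (rule sum_distrib_left[symmetric])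
    also have "\<dots> = 0" using D0_rowsum[of "cls (z i)"] cls_pos[OF z[OF i]] cls_le by simp
    finally show "(\<Sum>v<Suc k. sg (z i) * D0 (cls (z i)) v) = 0" .
  qed
  also have "mat k k (\<lambda>(i,v). sg (z i) * D0 (cls (z i)) v) = ?R * ?D"
    by (rule R_mult[symmetric]) (rule z)
  finally have E: "mat k k (\<lambda>(i,u). Ecol (2*n) m u (pp i)) = ?R * ?D * Qm" .
  have "det (?R * ?D * Qm) = det ?R * det ?D * det Qm"
    by (subst det_mult[of _ k], auto simp: Qm_def det_mult[of _ k])
  also have "det ?D = 1" by (rule D2_det)
  also have "det Qm = sign Phi" by (rule det_Qm)
  also have "det ?R = sign (\<lambda>i. if i < k then cls (z i) - 1 else i) * (\<Prod>i=0..<k. sg (z i))"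
    by (rule R_det[OF z sig'])
  finally have "det (?R * ?D * Qm) = sign (\<lambda>i. if i < k then cls (z i) - 1 else i) * (\<Prod>i=0..<k. sg (z i)) * sign Phi"
    by simp
  thus ?thesis unfolding E unfolding z_def .
qed

end


definition revp :: "nat \<Rightarrow> nat \<Rightarrow> nat" where "revp k = (\<lambda>i. if i < k then k - 1 - i else i)"

lemma revp_perm: "revp k permutes {0..<k}"
  by (rule inj_imp_permutes) (auto simp: revp_def inj_on_def)

lemma sign_revp: "sign (revp k) = (-1) ^ (\<Sum>x<k. x)"
proof (induction k rule: less_induct)
  case (less k)
  consider "k = 0" | "k = 1" | k' where "k = Suc (Suc k')" by (metis One_nat_def not0_implies_Suc)
  thus ?case
  proof cases
    case 1
    have "revp 0 = id" by (auto simp: revp_def)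
    thus ?thesis using 1 by simp
  next
    case 2
    have "revp 1 = id" by (auto simp: revp_def)
    thus ?thesis using 2 by simp
  next
    case 3
    have bj: "bij_betw Suc {0..<k'} {1..k'}" by (rule bij_betw_byWitness[where f'="\<lambda>x. x - 1"]) auto
    interpret pb: permutes_bij_finite "revp k'" "{0..<k'}" "{1..k'}" Suc "\<lambda>x. x - 1"
      "\<lambda>x. if x \<in> {1..k'} then Suc (revp k' (x - 1)) else x"
      by (unfold_locales; (rule reflexive)?) (simp_all add: revp_perm bj atLeastLessThanSuc_atLeastAtMost)
    define c where "c = (\<lambda>x. if x \<in> {1..k'} then Suc (revp k' (x - 1)) else x)"
    have sc: "sign c = sign (revp k')" unfolding c_def by (rule pb.sign_p')
    have pc: "c permutes {1..k'}" unfolding c_def by (rule pb.permutes_p')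
    have eq: "revp k = c \<circ> Transposition.transpose 0 (Suc k')"
      by (rule ext) (auto simp: revp_def c_def 3 transpose_def)
    have "sign (revp k) = sign c * sign (Transposition.transpose 0 (Suc k'))"
      unfolding eq by (rule sign_compose[OF permutes_imp_permutation[OF _ pc] permutation_swap_id]) simp
    also have "\<dots> = - sign (revp k')" using sc by (simp add: sign_swap_id)
    also have "\<dots> = - ((-1) ^ (\<Sum>x<k'. x))" using less.IH[of k'] 3 by simp
    also have "\<dots> = (-1) ^ (\<Sum>x<k. x)"
    proof -
      have "(\<Sum>x<k. x) = (\<Sum>x<k'. x) + 2 * k' + 1" using 3 by simp
      thus ?thesis by (simp add: power_add)
    qed
    finally show ?thesis .
  qed
qed

context L
begin

lemma sg_nat_floor: assumes "\<not> (2 * k + 1) dvd N"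
  shows "sg (int N) = (-1) ^ ((2 * N) div (2 * k + 1))"
proof -
  define r where "r = N mod (2*k+1)"
  define q where "q = N div (2*k+1)"
  have N: "N = q * (2*k+1) + r" unfolding r_def q_def by (rule div_mult_mod_eq[symmetric])
  have r: "r < 2*k+1" "r \<noteq> 0" using assms by (auto simp: r_def mod_eq_0_iff_dvd)
  have e2: "int (2*k+1) = n" by simp
  have im: "int N mod n = int r" unfolding r_def zmod_int e2 ..
  have "(2 * N) div (2*k+1) = 2 * q + (2 * r) div (2*k+1)"
  proof -
    have e3: "2 * N = (2 * r) + (2*q) * (2*k+1)" using N by (simp add: algebra_simps)
    show ?thesis by (subst e3, rule div_mult_self1, simp)
  qed
  moreover have "(2 * r) div (2*k+1) = (if r \<le> k then 0 else 1)"
  proof (cases "r \<le> k")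
    case True thus ?thesis by simp
  next
    case False
    hence "2*k+1 \<le> 2 * r" "2 * r < 2 * (2*k+1)" using r by auto
    hence "(2 * r) div (2*k+1) = 1" by (intro div_nat_eqI) auto
    thus ?thesis using False by simp
  qed
  ultimately have e: "(-1::int) ^ ((2 * N) div (2*k+1)) = (if r \<le> k then 1 else -1)"
    by (simp add: power_add power_mult)
  have "sg (int N) = (if r \<le> k then 1 else -1)" unfolding sg_def im using r by simp
  thus ?thesis using e by simp
qed

end

context L2
begin

lemma Psi_facts: "(\<lambda>i. if i < k then Phi (Suc i) - 1 else i) permutes {0..<k}"
  "sign (\<lambda>i. if i < k then Phi (Suc i) - 1 else i) = sign Phi"
proof -
  have bj: "bij_betw (\<lambda>x. x - 1) {1..k} {0..<k}" by (rule bij_betw_byWitness[where f'=Suc]) auto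
  interpret pb: permutes_bij_finite Phi "{1..k}" "{0..<k}" "\<lambda>x. x - 1" Suc
    "\<lambda>x. if x \<in> {0..<k} then Phi (Suc x) - 1 else x"
    by (unfold_locales; (rule reflexive)?) (simp_all only: Phi_perm1 bj, auto)
  have e: "(\<lambda>i. if i < k then Phi (Suc i) - 1 else i) = (\<lambda>x. if x \<in> {0..<k} then Phi (Suc x) - 1 else x)"
    by auto
  show "(\<lambda>i. if i < k then Phi (Suc i) - 1 else i) permutes {0..<k}" unfolding e by (rule pb.permutes_p')
  show "sign (\<lambda>i. if i < k then Phi (Suc i) - 1 else i) = sign Phi" unfolding e by (rule pb.sign_p')
qed

lemma prod_shift1: "(\<Prod>i=0..<k. f (Suc i)) = (\<Prod>x\<in>{1..k}. f x :: int)"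
proof -
  have "(\<Prod>x\<in>{1..k}. f x) = (\<Prod>x\<in>{Suc 0..<Suc k}. f x)" by (simp add: atLeastLessThanSuc_atLeastAtMost)
  also have "\<dots> = (\<Prod>i=0..<k. f (Suc i))" by (rule prod.shift_bounds_Suc_ivl)
  finally show ?thesis by simp
qed

lemma prod_rev1: "(\<Prod>i=0..<k. f (k - i)) = (\<Prod>x\<in>{1..k}. f x :: int)"
proof -
  have "(\<Prod>i=0..<k. f (Suc i)) = (\<Prod>i=0..<k. f (Suc (k + 0 - Suc i)))" by (rule prod.atLeastLessThan_rev)
  also have "\<dots> = (\<Prod>i=0..<k. f (k - i))" by (intro prod.cong refl) (simp add: Suc_diff_Suc)
  finally show ?thesis using prod_shift1[of f] by simp
qed

lemma prod_g_h: "(\<Prod>x\<in>{1..k}. sg (g * int x)) = (\<Prod>x\<in>{1..k}. sg (h * int x))"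
proof -
  have "(\<Prod>x\<in>{1..k}. sg (h * int x)) = (\<Prod>x\<in>Phi ` {1..k}. sg (h * int x))"
    using permutes_image[OF Phi_perm1] by simp
  also have "\<dots> = (\<Prod>x\<in>{1..k}. sg (h * int (Phi x)))"
  proof -
    have "inj_on Phi {1..k}" by (auto simp: inj_on_def intro: Phi_inj)
    from prod.reindex[OF this, of "\<lambda>x. sg (h * int x)"] show ?thesis by (simp add: comp_def)
  qed
  also have "\<dots> = (\<Prod>x\<in>{1..k}. sg (g * int x))"
  proof (intro prod.cong refl)
    fix x assume x: "x \<in> {1..k}"
    define a where "a = Phi x"
    define s where "s = sg (g * int x)"
    have a: "a = cls (g * int x)" using x by (simp add: a_def Phi_def)
    have nd: "\<not> n dvd g * int x"
    proof
      assume "n dvd g * int x" hence "n dvd int x" by (rule g_cancel)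
      thus False using x not_dvd_small[of "int x"] by auto
    qed
    have s: "s * s = 1" unfolding s_def by (rule sg_sq[OF nd])
    have r: "n dvd g * int x - s * int a" using rep_dvd[of "g * int x"] by (simp add: a s_def)
    have "n dvd (s * h) * (g * int x - s * int a) - s * int x * (g * h - 1)"
      by (rule dvd_diff[OF dvd_mult[OF r] dvd_mult[OF gh]])
    also have "(s * h) * (g * int x - s * int a) - s * int x * (g * h - 1) = s * int x - h * int a * (s * s)"
      by (simp add: algebra_simps)
    also have "\<dots> = - (h * int a - s * int x)" using s by simp
    finally have "n dvd - (h * int a - s * int x)" .
    hence "n dvd h * int a - s * int x" by (simp only: dvd_minus_iff)
    hence "sg (h * int a) = sg (s * int x)" by (rule sg_dvdI)
    also have "sg (s * int x) = s"
    proof -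
      have "s = 1 \<or> s = -1" unfolding s_def by (rule sg_pm[OF nd])
      moreover have "sg (int x) = 1" using x by (intro sg_small) auto
      ultimately show ?thesis using sg_neg[of "int x"] by auto
    qed
    finally show "sg (h * int (Phi x)) = sg (g * int x)" by (simp add: a_def s_def)
  qed
  finally show ?thesis by simp
qed

end


definition goodG :: "int \<Rightarrow> (int \<Rightarrow> int) \<Rightarrow> bool" where
  "goodG d G \<longleftrightarrow> (\<forall>t. G (-t) = - G t) \<and> (\<forall>t. G (t + d) = G t)"

definition TT :: "(int \<Rightarrow> int) \<Rightarrow> int \<Rightarrow> int" where "TT G t = G (t + 1) + G (t - 1)"

lemma goodG_T: "goodG d G \<Longrightarrow> goodG d (TT G)"
  unfolding goodG_def TT_def
proof (intro conjI allI)
  fix t assume a: "(\<forall>t. G (- t) = - G t) \<and> (\<forall>t. G (t + d) = G t)"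
  show "G (- t + 1) + G (- t - 1) = - (G (t + 1) + G (t - 1))"
    using a[THEN conjunct1, rule_format, of "t - 1"] a[THEN conjunct1, rule_format, of "t + 1"] by simp
  show "G (t + d + 1) + G (t + d - 1) = G (t + 1) + G (t - 1)"
    using a[THEN conjunct2, rule_format, of "t + 1"] a[THEN conjunct2, rule_format, of "t - 1"] by (simp add: algebra_simps)
qed

lemma goodG_0: "goodG d G \<Longrightarrow> G 0 = 0"
proof -
  assume "goodG d G"
  hence "G (-0) = - G 0" unfolding goodG_def by blast
  thus ?thesis by simp
qed

lemma goodG_mult: "goodG d G \<Longrightarrow> G (int j * d) = 0"
proof -
  assume g: "goodG d G"
  have "G (t + int j * d) = G t" for t
  proof (induction j)
    case 0 thus ?case by simp
  next
    case (Suc j)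
    have "G (t + int (Suc j) * d) = G ((t + int j * d) + d)" by (simp add: algebra_simps)
    also have "\<dots> = G (t + int j * d)" using g unfolding goodG_def by blast
    finally show ?case using Suc by simp
  qed
  from this[of 0] show ?thesis using goodG_0[OF g] by simp
qed

lemma shift_sum: fixes A B :: "int \<Rightarrow> int"
  assumes "A (int (Suc N')) = 0" "B 0 = 0"
  shows "(\<Sum>t\<le>Suc N'. A (int t) * B (int t + 1)) = (\<Sum>t\<le>Suc N'. A (int t - 1) * B (int t))"
proof -
  have "(\<Sum>t\<le>Suc N'. A (int t - 1) * B (int t)) = (\<Sum>t\<le>N'. A (int t) * B (int t + 1))"
    by (subst sum.atMost_Suc_shift) (simp add: assms add.commute)
  moreover have "(\<Sum>t\<le>Suc N'. A (int t) * B (int t + 1)) = (\<Sum>t\<le>N'. A (int t) * B (int t + 1))"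
    using assms by simp
  ultimately show ?thesis by simp
qed

lemma adjoint: fixes G f :: "int \<Rightarrow> int"
  assumes "G (int (Suc N')) = 0" "G 0 = 0" "f (int (Suc N')) = 0" "f 0 = 0"
  shows "(\<Sum>t\<le>Suc N'. G (int t) * (f (int t + 1) + f (int t - 1))) = (\<Sum>t\<le>Suc N'. TT G (int t) * f (int t))"
proof -
  have "(\<Sum>t\<le>Suc N'. G (int t) * (f (int t + 1) + f (int t - 1)))
     = (\<Sum>t\<le>Suc N'. G (int t) * f (int t + 1)) + (\<Sum>t\<le>Suc N'. f (int t - 1) * G (int t))"
    by (simp add: sum.distrib algebra_simps)
  also have "(\<Sum>t\<le>Suc N'. G (int t) * f (int t + 1)) = (\<Sum>t\<le>Suc N'. G (int t - 1) * f (int t))"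
    by (rule shift_sum) (use assms in auto)
  also have "(\<Sum>t\<le>Suc N'. f (int t - 1) * G (int t)) = (\<Sum>t\<le>Suc N'. f (int t) * G (int t + 1))"
    by (rule shift_sum[symmetric]) (use assms in auto)
  also have "(\<Sum>t\<le>Suc N'. G (int t - 1) * f (int t)) + (\<Sum>t\<le>Suc N'. f (int t) * G (int t + 1))
     = (\<Sum>t\<le>Suc N'. TT G (int t) * f (int t))"
    by (simp add: sum.distrib[symmetric] TT_def algebra_simps)
  finally show ?thesis .
qed

lemma Wf_parity: "even P \<Longrightarrow> odd (p + int N + m) \<Longrightarrow> Wf P m N p = 0"
proof (induction N arbitrary: p)
  case 0
  have "\<not> (p mod P = m mod P)"
  proof
    assume "p mod P = m mod P"
    hence "P dvd p - m" by (simp add: mod_eq_dvd_iff)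
    moreover have "2 dvd P" using 0(1) by simp
    ultimately have "even (p - m)" using dvd_trans by blast
    thus False using 0 by simp
  qed
  moreover have "\<not> (p mod P = (-m) mod P)"
  proof
    assume "p mod P = (-m) mod P"
    hence "P dvd p + m" by (simp add: mod_eq_dvd_iff)
    moreover have "2 dvd P" using 0(1) by simp
    ultimately have "even (p + m)" using dvd_trans by blast
    thus False using 0 by simp
  qed
  ultimately show ?case by (simp add: eps_def)
next
  case (Suc N)
  have e1: "p + 1 + int N + m = p + int (Suc N) + m" and e2: "p - 1 + int N + m = (p + int (Suc N) + m) - 2" by simp_all
  have "odd (p + 1 + int N + m)" unfolding e1 by (rule Suc.prems(2))
  moreover have "odd (p - 1 + int N + m)" unfolding e2 using Suc.prems(2) by presburger
  ultimately have "odd (p + 1 + int N + m)" "odd (p - 1 + int N + m)" by blast+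
  hence "Wf P m N (p+1) = 0" "Wf P m N (p-1) = 0" using Suc.IH[OF Suc.prems(1)] by blast+
  thus ?case by simp
qed


lemma pairing_zero:
  fixes k s :: nat and d :: int
  assumes k: "1 \<le> k" and s: "s \<le> 2*k - 1"
    and dn: "d dvd 2 * int k + 1" and dm: "d dvd int s + 1" and dpos: "d > 0"
    and G: "goodG d G"
  shows "(\<Sum>t\<le>2*k+1. G (int t) * Wf (2*(2*int k+1)) (int s + 1) N (int t)) = 0"
  using G
proof (induction N arbitrary: G)
  case 0
  let ?P = "2*(2*int k+1)"
  have e: "eps ?P (int s + 1) (int t) = ind (t = s + 1)" if t: "t \<le> 2*k+1" for t
  proof -
    have a: "int t mod ?P = int t" using t by (intro mod_pos_pos_trivial) auto
    have b: "(int s + 1) mod ?P = int s + 1" using s by (intro mod_pos_pos_trivial) auto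
    have c: "(-(int s + 1)) mod ?P = ?P - (int s + 1)"
    proof -
      have ee: "?P - (int s + 1) = (-(int s + 1)) + ?P" by simp
      have "(-(int s + 1)) mod ?P = (?P - (int s + 1)) mod ?P" unfolding ee by (rule mod_add_self2[symmetric])
      also have "\<dots> = ?P - (int s + 1)" using s k by (intro mod_pos_pos_trivial) auto
      finally show ?thesis .
    qed
    have "int t \<noteq> ?P - (int s + 1)" using t s k by auto
    thus ?thesis unfolding eps_def ind_def a b c by auto
  qed
  have "(\<Sum>t\<le>2*k+1. G (int t) * Wf ?P (int s + 1) 0 (int t)) = (\<Sum>t\<le>2*k+1. if t = s + 1 then G (int t) else 0)"
  proof (intro sum.cong refl)
    fix t assume "t \<in> {..2*k+1}"
    hence "t \<le> 2*k+1" by simp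
    from e[OF this] show "G (int t) * Wf ?P (int s + 1) 0 (int t) = (if t = s + 1 then G (int t) else 0)"
      by (auto simp: ind_def)
  qed
  also have "\<dots> = G (int (s + 1))"
  proof -
    have "Suc s \<le> 2 * k" using s k by arith
    thus ?thesis by (simp add: sum.delta)
  qed
  also have "G (int (s + 1)) = G (int s + 1)" by (simp add: add.commute)
  also have "\<dots> = 0"
  proof -
    obtain j where j: "int s + 1 = d * j" using dm by blast
    have "0 < d * j" using j by linarith
    hence "j \<ge> 0" using dpos by (simp add: zero_less_mult_iff)
    hence eq: "int s + 1 = int (nat j) * d" using j by (simp add: mult.commute)
    show ?thesis by (subst eq, rule goodG_mult[OF 0])
  qed
  finally show ?case .
next
  case (Suc N)
  let ?P = "2*(2*int k+1)"
  let ?W = "Wf ?P (int s + 1) N"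
  have Gn: "G (int (Suc (2*k))) = 0"
  proof -
    obtain j where j: "2 * int k + 1 = d * j" using dn by blast
    have "0 < d * j" using j by linarith
    hence "j \<ge> 0" using dpos by (simp add: zero_less_mult_iff)
    hence eq: "int (Suc (2*k)) = int (nat j) * d" using j by (simp add: mult.commute)
    show ?thesis by (subst eq, rule goodG_mult[OF Suc.prems])
  qed
  have e4: "int (Suc (2*k)) = 2*int k+1" by simp
  have Wn: "?W (int (Suc (2*k))) = 0" unfolding e4 by (rule Wf_half) simp
  have "(\<Sum>t\<le>2*k+1. G (int t) * Wf ?P (int s + 1) (Suc N) (int t))
      = (\<Sum>t\<le>Suc (2*k). G (int t) * (?W (int t + 1) + ?W (int t - 1)))" by simp
  also have "\<dots> = (\<Sum>t\<le>Suc (2*k). TT G (int t) * ?W (int t))"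
    by (rule adjoint) (use Gn Wn goodG_0[OF Suc.prems] Wf_zero in auto)
  also have "\<dots> = 0" using Suc.IH[OF goodG_T[OF Suc.prems]] by simp
  finally show ?case .
qed


lemma matW:
  assumes k: "1 \<le> k" and s: "s \<le> 2*k - 1" and chi: "chi \<le> 1"
  shows "mat k k (\<lambda>(i,j). int (C (2*k-1) (2*j) (int (2*i+chi)) (int s)))
       = mat k k (\<lambda>(i,j). Wf (2*(2*int k+1)) (int s + 1) (2*j) (int (2*i+chi) + 1))"
proof (rule eq_matI)
  fix i j assume "i < dim_row (mat k k (\<lambda>(i,j). Wf (2*(2*int k+1)) (int s + 1) (2*j) (int (2*i+chi) + 1)))"
    "j < dim_col (mat k k (\<lambda>(i,j). Wf (2*(2*int k+1)) (int s + 1) (2*j) (int (2*i+chi) + 1)))"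
  hence i: "i < k" and j: "j < k" by auto
  have K: "int (2*k-1) + 2 = 2 * int k + 1" using k by simp
  have "int (C (2*k-1) (2*j) (int (2*i+chi)) (int s)) = Wf (2*(int (2*k-1)+2)) (int s + 1) (2*j) (int (2*i+chi) + 1)"
    by (rule C_W) (use s k i chi in auto)
  thus "mat k k (\<lambda>(i,j). int (C (2*k-1) (2*j) (int (2*i+chi)) (int s))) $$ (i, j) =
        mat k k (\<lambda>(i,j). Wf (2*(2*int k+1)) (int s + 1) (2*j) (int (2*i+chi) + 1)) $$ (i, j)"
    using i j unfolding K by simp
qed auto

lemma detEU:
  assumes k: "1 \<le> k"
  shows "det (mat k k (\<lambda>(i,j). Wf P m (2*j) (pp i))) = det (mat k k (\<lambda>(i,u). Ecol P m u (pp i)))"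
proof -
  interpret L k by unfold_locales (rule k)
  let ?E = "mat k k (\<lambda>(i,u). Ecol P m u (pp i))"
  let ?U = "mat k k (\<lambda>(u,j). Uc j u)"
  have "mat k k (\<lambda>(i,j). Wf P m (2*j) (pp i)) = ?E * ?U"
  proof (rule eq_matI)
    fix i j assume "i < dim_row (?E * ?U)" "j < dim_col (?E * ?U)"
    hence i: "i < k" and j: "j < k" by auto
    have "Wf P m (2*j) (pp i) = (\<Sum>u<k. Uc j u * Ecol P m u (pp i))" by (rule W_U[OF j])
    also have "\<dots> = (\<Sum>u = 0..<k. Ecol P m u (pp i) * Uc j u)" by (simp add: atLeast0LessThan mult.commute)
    finally show "mat k k (\<lambda>(i,j). Wf P m (2*j) (pp i)) $$ (i, j) = (?E * ?U) $$ (i, j)"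
      using i j by (simp add: scalar_prod_def)
  qed auto
  hence "det (mat k k (\<lambda>(i,j). Wf P m (2*j) (pp i))) = det ?E * det ?U"
    by (simp add: det_mult[of _ k])
  also have "det ?U = 1" by (rule upper_det1) (auto simp: Uc_zero Uc_diag)
  finally show ?thesis by simp
qed

lemma sum_shift1: "(\<Sum>i=0..<k. f (Suc i)) = (\<Sum>x\<in>{1..k}. f x :: nat)"
proof -
  have "(\<Sum>x\<in>{1..k}. f x) = (\<Sum>x\<in>{Suc 0..<Suc k}. f x)" by (simp add: atLeastLessThanSuc_atLeastAtMost)
  also have "\<dots> = (\<Sum>i=0..<k. f (Suc i))" by (rule sum.shift_bounds_Suc_ivl)
  finally show ?thesis by simp
qed

lemma neg1_pow_eq: "even (a + b) \<Longrightarrow> (-1::int) ^ a = (-1) ^ b"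
  by (metis (no_types, lifting) minus_one_power_iff odd_add)

context L3
begin

lemma prod_hh: assumes m: "m = int s + 1"
  shows "(\<Prod>x\<in>{1..k}. sg (hh * int x)) = (-1) ^ ((s+1) * (\<Sum>x\<in>{1..k}. x) + (\<Sum>x\<in>{1..k}. (x * (s+1)) div (2*k+1)))"
proof -
  have "(\<Prod>x\<in>{1..k}. sg (hh * int x)) = (\<Prod>x\<in>{1..k}. (-1) ^ ((s+1) * x + (x * (s+1)) div (2*k+1)))"
  proof (intro prod.cong refl)
    fix x assume x: "x \<in> {1..k}"
    define N where "N = (k+1) * (s+1) * x"
    have hx: "hh * int x = int N" unfolding N_def hh_def by (simp add: m algebra_simps)
    have nd: "\<not> (2*k+1) dvd N"
    proof
      assume "(2*k+1) dvd N"
      hence "n dvd int N" by (metis int_dvd_int_iff of_nat_Suc of_nat_add of_nat_mult add.commute Suc_eq_plus1 of_nat_numeral)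
      hence "n dvd hh * int x" unfolding hx .
      hence "n dvd int x" by (rule h_cancel)
      thus False using x not_dvd_small[of "int x"] by auto
    qed
    have "(2 * N) div (2*k+1) = (s+1) * x + (x * (s+1)) div (2*k+1)"
    proof -
      have e: "2 * N = x * (s+1) + ((s+1) * x) * (2*k+1)" unfolding N_def by (simp add: algebra_simps)
      show ?thesis by (subst e, rule div_mult_self1, simp)
    qed
    thus "sg (hh * int x) = (-1) ^ ((s+1) * x + (x * (s+1)) div (2*k+1))"
      unfolding hx using sg_nat_floor[OF nd] by simp
  qed
  also have "\<dots> = (-1) ^ (\<Sum>x\<in>{1..k}. (s+1) * x + (x * (s+1)) div (2*k+1))"
    by (rule power_sum[symmetric])
  also have "(\<Sum>x\<in>{1..k}. (s+1) * x + (x * (s+1)) div (2*k+1)) = (s+1) * (\<Sum>x\<in>{1..k}. x) + (\<Sum>x\<in>{1..k}. (x * (s+1)) div (2*k+1))"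
    by (simp add: sum.distrib sum_distrib_left)
  finally show ?thesis .
qed

end


lemma sum_Suc_lemma: "(\<Sum>i<k. Suc i) = (\<Sum>i<k. i) + (k::nat)"
  by (induction k) auto

context L3
begin

lemma coprime_det:
  assumes m: "m = int s + 1" and s: "s \<le> 2*k - 1" and chi: "chi = (if odd s then 1 else 0 :: nat)"
  shows "det (mat k k (\<lambda>(i,u). Ecol (2*n) m u (int (2*i+chi) + 1))) = (-1) ^ (\<Sum>i=1..k. (i*(s+1)) div (2*k+1))"
proof -
  define pp where "pp i = int (2*i+chi) + 1" for i
  define F where "F = (\<Sum>i=1..k. (i*(s+1)) div (2*k+1))"
  define A where "A = (\<Sum>x<k. x)"
  have T: "(\<Sum>x\<in>{1..k}. x) = A + k"
  proof -
    have "(\<Sum>x\<in>{1..k}. x) = (\<Sum>i=0..<k. Suc i)" by (rule sum_shift1[symmetric])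
    also have "\<dots> = A + k" unfolding A_def atLeast0LessThan by (rule sum_Suc_lemma)
    finally show ?thesis .
  qed
  have p1: "2 dvd pp i - m" for i
  proof -
    have "pp i - m = 2 * int i + (int chi - int s)" unfolding pp_def m by simp
    moreover have "2 dvd int chi - int s" unfolding chi by (cases "odd s") (auto simp: even_iff_mod_2_eq_zero odd_iff_mod_2_eq_one, presburger+)
    ultimately show ?thesis by simp
  qed
  have p2: "\<not> n dvd pp i" if i: "i < k" for i
  proof (rule not_dvd_small)
    show "1 \<le> pp i" unfolding pp_def by simp
    have "chi \<le> 1" unfolding chi by simp
    thus "pp i < n" unfolding pp_def using i by simp
  qed
  have hp: "(\<Prod>x\<in>{1..k}. sg (g * int x)) = (-1) ^ ((s+1) * (A + k) + F)"
    using prod_g_h prod_hh[OF m] unfolding F_def T by simp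
  show ?thesis
  proof (cases "odd s")
    case True
    hence chi1: "chi = 1" unfolding chi by simp
    have zc: "cls (cc * pp i) = Phi (Suc i) \<and> sg (cc * pp i) = sg (g * int (Suc i))" if i: "i < k" for i
    proof -
      have "cc * pp i - g * int (Suc i) = int (Suc i) * (2 * cc - g)" unfolding pp_def chi1 by (simp add: algebra_simps)
      also have "\<dots> = n * (int (Suc i) * g)" unfolding c2 by simp
      finally have "n dvd cc * pp i - g * int (Suc i)" by simp
      thus ?thesis using i cls_dvdI sg_dvdI by (simp add: Phi_def)
    qed
    have sig: "(\<lambda>i. if i < k then cls (cc * pp i) - 1 else i) = (\<lambda>i. if i < k then Phi (Suc i) - 1 else i)"
      using zc by auto
    have "det (mat k k (\<lambda>(i,u). Ecol (2*n) m u (pp i)))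
       = sign (\<lambda>i. if i < k then cls (cc * pp i) - 1 else i) * (\<Prod>i=0..<k. sg (cc * pp i)) * sign Phi"
      by (rule Emat_det) (use p1 p2 Psi_facts(1) sig in auto)
    also have "(\<Prod>i=0..<k. sg (cc * pp i)) = (\<Prod>i=0..<k. sg (g * int (Suc i)))"
      using zc by (intro prod.cong refl) auto
    also have "\<dots> = (\<Prod>x\<in>{1..k}. sg (g * int x))" by (rule prod_shift1)
    also have "sign (\<lambda>i. if i < k then cls (cc * pp i) - 1 else i) = sign Phi" unfolding sig by (rule Psi_facts(2))
    finally have "det (mat k k (\<lambda>(i,u). Ecol (2*n) m u (pp i))) = (-1) ^ ((s+1) * (A + k) + F)"
      using hp by (simp add: mult.assoc mult.left_commute)
    also have "\<dots> = (-1) ^ F" by (rule neg1_pow_eq) (use True in simp)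
    finally show ?thesis unfolding pp_def F_def .
  next
    case False
    hence chi0: "chi = 0" unfolding chi by simp
    have zc: "cls (cc * pp i) = Phi (k - i) \<and> sg (cc * pp i) = - sg (g * int (k - i))" if i: "i < k" for i
    proof -
      have "cc * pp i - (- (g * int (k - i))) = n * (cc - g * int (k - i))"
        unfolding pp_def chi0 using i c2 by (simp add: algebra_simps of_nat_diff)
      hence "n dvd cc * pp i - (- (g * int (k - i)))" by simp
      hence "cls (cc * pp i) = cls (- (g * int (k - i)))" "sg (cc * pp i) = sg (- (g * int (k - i)))"
        by (rule cls_dvdI, rule sg_dvdI)
      thus ?thesis using i cls_neg sg_neg by (simp add: Phi_def)
    qed
    define Psi where "Psi = (\<lambda>i. if i < k then Phi (Suc i) - 1 else i)"
    have sig: "(\<lambda>i. if i < k then cls (cc * pp i) - 1 else i) = Psi \<circ> revp k"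
    proof
      fix i show "(if i < k then cls (cc * pp i) - 1 else i) = (Psi \<circ> revp k) i"
        using zc[of i] by (auto simp: Psi_def revp_def Suc_diff_Suc)
    qed
    have pPsi: "Psi permutes {0..<k}" unfolding Psi_def by (rule Psi_facts(1))
    have sPsi: "sign Psi = sign Phi" unfolding Psi_def by (rule Psi_facts(2))
    have psig: "Psi \<circ> revp k permutes {0..<k}" by (rule permutes_compose[OF revp_perm pPsi])
    have "det (mat k k (\<lambda>(i,u). Ecol (2*n) m u (pp i)))
       = sign (\<lambda>i. if i < k then cls (cc * pp i) - 1 else i) * (\<Prod>i=0..<k. sg (cc * pp i)) * sign Phi"
      by (rule Emat_det) (use p1 p2 psig sig in auto)
    also have "sign (\<lambda>i. if i < k then cls (cc * pp i) - 1 else i) = sign Phi * (-1) ^ A"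
    proof -
      have "sign (Psi \<circ> revp k) = sign Psi * sign (revp k)"
        by (rule sign_compose) (use pPsi revp_perm in \<open>auto intro: permutes_imp_permutation\<close>)
      thus ?thesis unfolding sig sPsi sign_revp A_def .
    qed
    also have "(\<Prod>i=0..<k. sg (cc * pp i)) = (\<Prod>i=0..<k. (-1) * sg (g * int (k - i)))"
      using zc by (intro prod.cong refl) auto
    also have "\<dots> = (-1) ^ k * (\<Prod>i=0..<k. sg (g * int (k - i)))"
      unfolding prod.distrib by simp
    also have "(\<Prod>i=0..<k. sg (g * int (k - i))) = (\<Prod>x\<in>{1..k}. sg (g * int x))"
      by (rule prod_rev1)
    finally have "det (mat k k (\<lambda>(i,u). Ecol (2*n) m u (pp i))) = (-1) ^ A * (-1) ^ k * (-1) ^ ((s+1) * (A + k) + F) * (sign Phi * sign Phi)"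
      using hp by (simp add: algebra_simps)
    also have "\<dots> = (-1) ^ (A + k + ((s+1) * (A + k) + F))" by (simp add: power_add)
    also have "\<dots> = (-1) ^ F"
    proof (rule neg1_pow_eq)
      have eq: "A + k + ((s+1) * (A + k) + F) + F = (s + 2) * (A + k) + 2 * F" by (simp add: algebra_simps)
      have ev: "even ((s + 2) * (A + k) + 2 * F)"
      proof (rule dvd_add)
        have "even (s + 2)" using False by simp
        thus "even ((s + 2) * (A + k))" by (rule dvd_mult2)
      qed simp
      show "even (A + k + ((s+1) * (A + k) + F) + F)" unfolding eq by (rule ev)
    qed
    finally show ?thesis unfolding pp_def F_def .
  qed
qed

end


lemma zero_det:
  fixes k s chi :: nat
  assumes k: "1 \<le> k" and s: "s \<le> 2*k - 1" and chi: "chi = (if odd s then 1 else 0)"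
    and gc: "gcd (s+1) (2*k+1) \<noteq> 1"
  shows "det (mat k k (\<lambda>(i,j). Wf (2*(2*int k+1)) (int s + 1) (2*j) (int (2*i+chi) + 1))) = 0"
proof -
  define d where "d = int (gcd (s+1) (2*k+1))"
  define c0 where "c0 = int chi + 1"
  define G where "G t = ind ([t = c0] (mod d)) - ind ([t = -c0] (mod d))" for t
  let ?P = "2*(2*int k+1)"
  let ?M = "mat k k (\<lambda>(i,j). Wf ?P (int s + 1) (2*j) (int (2*i+chi) + 1))"
  have dn: "d dvd 2 * int k + 1"
  proof -
    have "int (gcd (s+1) (2*k+1)) dvd int (2*k+1)" by (simp only: int_dvd_int_iff) simp
    thus ?thesis by (simp add: d_def add.commute)
  qed
  have dm: "d dvd int s + 1"
  proof -
    have "int (gcd (s+1) (2*k+1)) dvd int (s+1)" by (simp only: int_dvd_int_iff) simp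
    thus ?thesis by (simp add: d_def add.commute)
  qed
  have dpos: "d > 0" unfolding d_def by simp
  have d1: "d \<noteq> 1" using gc unfolding d_def by simp
  have dodd: "odd d"
  proof
    assume "even d" hence "2 dvd 2 * int k + 1" using dn by (rule dvd_trans)
    thus False by simp
  qed
  have d3: "d \<ge> 3" using dpos d1 dodd by presburger
  have good: "goodG d G"
    unfolding goodG_def
  proof (intro conjI allI)
    fix t
    have a: "[- t = c0] (mod d) = [t = - c0] (mod d)" using cong_minus_minus_iff[of t "-c0" d] by simp
    have b: "[- t = - c0] (mod d) = [t = c0] (mod d)" using cong_minus_minus_iff[of t c0 d] by simp
    show "G (- t) = - G t" unfolding G_def a b by simp
    show "G (t + d) = G t" unfolding G_def cong_def by simp
  qed
  have chi1: "chi \<le> 1" unfolding chi by simp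
  have Gc0: "G c0 = 1"
  proof -
    have "\<not> [c0 = - c0] (mod d)"
    proof
      assume "[c0 = - c0] (mod d)"
      hence "d dvd 2 * c0" by (simp add: cong_iff_dvd_diff)
      moreover have "0 < 2 * c0" "2 * c0 \<le> 4" using chi1 by (auto simp: c0_def)
      ultimately have "d \<le> 4" using zdvd_imp_le[of d "2*c0"] by simp
      hence "d = 3" using d3 dodd by presburger
      thus False using \<open>d dvd 2 * c0\<close> chi1 unfolding c0_def by (cases chi) auto
    qed
    thus ?thesis unfolding G_def ind_def by simp
  qed
  define v where "v = vec k (\<lambda>i. G (int (2*i+chi) + 1))"
  have vnz: "v \<noteq> 0\<^sub>v k"
  proof
    assume "v = 0\<^sub>v k"
    hence "v $ 0 = 0" using k by simp
    moreover have "v $ 0 = G c0" using k unfolding v_def c0_def by simp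
    ultimately show False using Gc0 by simp
  qed
  have Mv: "transpose_mat ?M *\<^sub>v v = 0\<^sub>v k"
  proof (rule eq_vecI)
    fix j assume "j < dim_vec (0\<^sub>v k :: int vec)"
    hence j: "j < k" by simp
    define W where "W = Wf ?P (int s + 1) (2*j)"
    define q where "q i = 2*i+chi+1" for i
    have "(transpose_mat ?M *\<^sub>v v) $ j = (\<Sum>i = 0..<k. W (int (q i)) * G (int (q i)))"
      using j by (simp add: scalar_prod_def v_def W_def q_def ac_simps)
    also have "\<dots> = (\<Sum>t \<in> q ` {0..<k}. G (int t) * W (int t))"
      by (subst sum.reindex) (auto simp: inj_on_def q_def mult.commute)
    also have "\<dots> = (\<Sum>t\<le>2*k+1. G (int t) * W (int t))"
    proof (rule sum.mono_neutral_left)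
      show "q ` {0..<k} \<subseteq> {..2*k+1}" using chi1 by (auto simp: q_def)
      show "\<forall>t\<in>{..2*k+1} - q ` {0..<k}. G (int t) * W (int t) = 0"
      proof
        fix t assume t: "t \<in> {..2*k+1} - q ` {0..<k}"
        have "W (int t) = 0"
        proof (cases "t = 0 \<or> t = 2*k+1")
          case True
          thus ?thesis
          proof
            assume "t = 0" thus ?thesis unfolding W_def using Wf_zero by simp
          next
            assume "t = 2*k+1"
            hence "int t = 2 * int k + 1" by simp
            thus ?thesis unfolding W_def by (simp only:) (rule Wf_half, simp)
          qed
        next
          case False
          show ?thesis
          proof (cases "odd (int t + int (2*j) + (int s + 1))")
            case True thus ?thesis unfolding W_def by (intro Wf_parity) simp_all
          next
            case odd: False
            have t1: "1 \<le> t" "t \<le> 2*k" using False t by auto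
            have "int t + int (2*j) + (int s + 1) = int (t + 2*j + s + 1)" by simp
            hence "even (t + 2*j + s + 1)" using odd by (simp only: even_of_nat, simp)
            hence par: "even (t + s + 1)" by simp
            have "\<exists>i<k. t = 2*i+chi+1"
            proof (cases "odd s")
              case True
              hence "chi = 1" "even t" using chi par by auto
              thus ?thesis using t1 by presburger
            next
              case False
              hence "chi = 0" "odd t" using chi par by auto
              thus ?thesis using t1 by presburger
            qed
            then obtain i where "i < k" "t = q i" unfolding q_def by blast
            hence "t \<in> q ` {0..<k}" by auto
            thus ?thesis using t by blast
          qed
        qed
        thus "G (int t) * W (int t) = 0" by simp
      qed
    qed simp
    also have "\<dots> = 0" unfolding W_def by (rule pairing_zero[OF k s dn dm dpos good])
    finally show "(transpose_mat ?M *\<^sub>v v) $ j = 0\<^sub>v k $ j" using j by simp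
  qed simp
  have vc: "v \<in> carrier_vec k" by (simp add: v_def)
  have tc: "transpose_mat ?M \<in> carrier_mat k k" by simp
  have "det (transpose_mat ?M) = 0"
    using det_0_iff_vec_prod_zero[OF tc] vc vnz Mv by blast
  thus ?thesis by (simp add: det_transpose[of _ k])
qed


theorem proposition58:
  fixes k :: nat and s :: nat
  assumes "k \<ge> 1" and "s \<le> 2 * k - 1"
  defines "\<chi> \<equiv> (if odd s then 1 else 0 :: nat)"
  shows "det (mat k k (\<lambda>(i, j). int (C (2 * k - 1) (2 * j) (int (2 * i + \<chi>)) (int s))))
       = (if gcd (s + 1) (2 * k + 1) \<noteq> 1 then 0
          else (-1) ^ (\<Sum>i = 1..k. (i * (s + 1)) div (2 * k + 1)))"
proof -
  have chi1: "\<chi> \<le> 1" by (simp add: \<chi>_def)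
  have chi_eq: "\<chi> = (if odd s then 1 else 0)" by (simp add: \<chi>_def)
  have M: "mat k k (\<lambda>(i,j). int (C (2*k-1) (2*j) (int (2*i+\<chi>)) (int s)))
      = mat k k (\<lambda>(i,j). Wf (2*(2*int k+1)) (int s + 1) (2*j) (int (2*i+\<chi>) + 1))"
    by (rule matW[OF assms(1,2) chi1])
  show ?thesis
  proof (cases "gcd (s+1) (2*k+1) \<noteq> 1")
    case True
    thus ?thesis unfolding M using zero_det[OF assms(1,2) chi_eq True] by simp
  next
    case False
    hence cop: "coprime (s+1) (2*k+1)" by (simp add: coprime_iff_gcd_eq_1)
    obtain x where x: "[(s+1) * x = Suc 0] (mod (2*k+1))" using cong_solve_coprime_nat[OF cop] by blast
    define g where "g = 2 * int x"
    have gm: "(2 * int k + 1) dvd g * (int s + 1) - 2"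
    proof -
      have "[int ((s+1)*x) = int (Suc 0)] (mod int (2*k+1))" using x by (simp only: cong_int_iff)
      hence "int (2*k+1) dvd int ((s+1)*x) - int (Suc 0)" by (simp only: cong_iff_dvd_diff)
      moreover have "int (2*k+1) = 2*int k+1" "int (Suc 0) = 1" by simp_all
      ultimately have "(2*int k+1) dvd int ((s+1)*x) - 1" by (simp only:)
      hence "(2*int k+1) dvd 2 * (int ((s+1)*x) - 1)" by (rule dvd_mult)
      moreover have "g * (int s + 1) - 2 = 2 * (int ((s+1)*x) - 1)" by (simp add: g_def algebra_simps)
      ultimately show ?thesis by simp
    qed
    interpret L3 k g "int s + 1" by unfold_locales (use assms(1) gm in auto)
    have "det (mat k k (\<lambda>(i,j). Wf (2*(2*int k+1)) (int s + 1) (2*j) (int (2*i+\<chi>) + 1)))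
        = det (mat k k (\<lambda>(i,u). Ecol (2*(2*int k+1)) (int s + 1) u (int (2*i+\<chi>) + 1)))"
      by (rule detEU[OF assms(1), where pp = "\<lambda>i. int (2*i+\<chi>) + 1"])
    also have "\<dots> = (-1) ^ (\<Sum>i=1..k. (i*(s+1)) div (2*k+1))"
      by (rule coprime_det[OF refl assms(2) chi_eq])
    finally show ?thesis unfolding M using False by simp
  qed
qed


end
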